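(* In the group $\mathrm{Aut}\, F_2$, $$\mathrm{Aut}\, F_2 = \Lambda\Psi\Phi^*\Delta = \Psi(\Sigma_0^{-1})^*\Lambda\, \varphi_{a,ba}^*\,(\varphi_{a^{-1},b}\cup \varphi_{a^{-1},b^{-1}}).$$
   Context: $F_2$ is the free group on $\{a,b\}$. For $x,y\in F_2$, $\varphi_{x,y}$ is the endomorphism of $F_2$ mapping $a$ to $x$ and $b$ to $y$. Products of subsets of $\mathrm{Aut}\, F_2$ are taken elementwise with the group law (composition, $(\sigma\tau)(u)=\sigma(\tau(u))$); for a subset $X$, $X^*$ is the submonoid generated by $X$, $X^{-1}$ is the set of inverses, and for a single automorphism $\varphi$, $\varphi^* = \{\varphi^n : n\ge 0\}$. The sets are: $\Sigma_0 = \{ \varphi_{a,ba}, \varphi_{b^{-1},a^{-1}}\}$; $\Phi = \{ \varphi_{a,ba}, \varphi_{ab,b},\varphi_{a,ab}, \varphi_{ba,b}\}$; $\Delta = \{ \varphi_{a,a^mb^{\epsilon}a^n} : m,n \in \mathbb{Z},\ \epsilon \in \{ 1,-1\}\}$; $\Psi = \{ \varphi \in \mathrm{Aut}\, F_2 : |\varphi(a)| = |\varphi(b)| = 1\}$ (with $|g|$ the length of the reduced word representing $g$); $\Lambda = \{ \lambda_w : w \in F_2\}$, where $\lambda_w$ is the inner automorphism $u\mapsto w^{-1}uw$. *)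

theory Defs
  imports Main
begin

datatype gen = GA | GB

text \<open>A letter is a generator together with a flag: False = the generator, True = its inverse.\<close>
type_synonym letter = "gen \<times> bool"

definition inv_letter :: "letter \<Rightarrow> letter" where
  "inv_letter l = (fst l, \<not> snd l)"

fun cons_red :: "letter \<Rightarrow> letter list \<Rightarrow> letter list" where
  "cons_red x [] = [x]"
| "cons_red x (y # ys) = (if y = inv_letter x then ys else x # y # ys)"

definition red :: "letter list \<Rightarrow> letter list" where
  "red w = foldr cons_red w []"

definition reduced :: "letter list \<Rightarrow> bool" where
  "reduced w = (\<forall>i. Suc i < length w \<longrightarrow> w ! Suc i \<noteq> inv_letter (w ! i))"

definition F2 :: "letter list set" where
  "F2 = {w. reduced w}"

definition gmult :: "letter list \<Rightarrow> letter list \<Rightarrow> letter list" where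
  "gmult u v = red (u @ v)"

definition ginv :: "letter list \<Rightarrow> letter list" where
  "ginv w = rev (map inv_letter w)"

definition gpow :: "letter list \<Rightarrow> int \<Rightarrow> letter list" where
  "gpow w n = (if 0 \<le> n then red (concat (replicate (nat n) w))
               else red (concat (replicate (nat (- n)) (ginv w))))"

definition ga :: "letter list" where "ga = [(GA, False)]"
definition gb :: "letter list" where "gb = [(GB, False)]"

fun limg :: "letter list \<Rightarrow> letter list \<Rightarrow> letter \<Rightarrow> letter list" where
  "limg x y (GA, e) = (if e then ginv x else x)"
| "limg x y (GB, e) = (if e then ginv y else y)"

text \<open>phi x y is the endomorphism a \<mapsto> x, b \<mapsto> y (defined on all words, output reduced).\<close>
definition phi :: "letter list \<Rightarrow> letter list \<Rightarrow> letter list \<Rightarrow> letter list" where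
  "phi x y w = red (concat (map (limg x y) w))"

definition AutF2 :: "(letter list \<Rightarrow> letter list) set" where
  "AutF2 = {phi x y | x y. x \<in> F2 \<and> y \<in> F2 \<and> bij_betw (phi x y) F2 F2}"

text \<open>Identity automorphism (as a function on all words it is free reduction).\<close>
definition idA :: "letter list \<Rightarrow> letter list" where
  "idA = phi ga gb"

definition autinv :: "(letter list \<Rightarrow> letter list) \<Rightarrow> (letter list \<Rightarrow> letter list)" where
  "autinv f = (THE g. g \<in> AutF2 \<and> (\<forall>w\<in>F2. g (f w) = w))"

definition setprod :: "('b \<Rightarrow> 'c) set \<Rightarrow> ('a \<Rightarrow> 'b) set \<Rightarrow> ('a \<Rightarrow> 'c) set" (infixl "\<cdot>\<cdot>" 70) where
  "X \<cdot>\<cdot> Y = {f \<circ> g | f g. f \<in> X \<and> g \<in> Y}"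

definition setinv :: "(letter list \<Rightarrow> letter list) set \<Rightarrow> (letter list \<Rightarrow> letter list) set" where
  "setinv X = autinv ` X"

inductive_set mstar :: "(letter list \<Rightarrow> letter list) set \<Rightarrow> (letter list \<Rightarrow> letter list) set"
  for X where
  unit: "idA \<in> mstar X"
| step: "f \<in> X \<Longrightarrow> g \<in> mstar X \<Longrightarrow> f \<circ> g \<in> mstar X"

definition lam :: "letter list \<Rightarrow> letter list \<Rightarrow> letter list" where
  "lam w u = gmult (gmult (ginv w) u) w"

definition Sigma0 :: "(letter list \<Rightarrow> letter list) set" where
  "Sigma0 = {phi ga (gmult gb ga), phi (ginv gb) (ginv ga)}"

definition PhiS :: "(letter list \<Rightarrow> letter list) set" where
  "PhiS = {phi ga (gmult gb ga), phi (gmult ga gb) gb, phi ga (gmult ga gb), phi (gmult gb ga) gb}"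

definition DeltaS :: "(letter list \<Rightarrow> letter list) set" where
  "DeltaS = {phi ga (gmult (gmult (gpow ga m) (gpow gb e)) (gpow ga n)) | m n e.
               e \<in> {1, -1}}"

definition PsiS :: "(letter list \<Rightarrow> letter list) set" where
  "PsiS = {f \<in> AutF2. length (f ga) = 1 \<and> length (f gb) = 1}"

definition LambdaS :: "(letter list \<Rightarrow> letter list) set" where
  "LambdaS = {lam w | w. w \<in> F2}"

end

theory Submission
  imports Defs
begin


section \<open>Basic free group facts\<close>

lemma inv_letter_inv[simp]: "inv_letter (inv_letter l) = l"
  by (cases l) (simp add: inv_letter_def)

lemma inv_letter_neq[simp]: "inv_letter l \<noteq> l" "l \<noteq> inv_letter l"
  by (cases l, simp add: inv_letter_def)+

lemma inv_letter_eq_iff[simp]: "inv_letter l = inv_letter m \<longleftrightarrow> l = m"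
  by (metis inv_letter_inv)

lemma fst_inv_letter[simp]: "fst (inv_letter l) = fst l"
  by (simp add: inv_letter_def)

definition act :: "letter list \<Rightarrow> letter list \<Rightarrow> letter list" where
  "act u z = foldr cons_red u z"

lemma act_Nil[simp]: "act [] z = z" by (simp add: act_def)
lemma act_Cons[simp]: "act (x # u) z = cons_red x (act u z)" by (simp add: act_def)
lemma act_append: "act (u @ v) z = act u (act v z)" by (simp add: act_def)

lemma red_act: "red w = act w []" by (simp add: red_def act_def)

lemma red_Nil[simp]: "red [] = []" by (simp add: red_def)
lemma red_Cons: "red (x # w) = cons_red x (red w)" by (simp add: red_def)

lemma reduced_Nil[simp]: "reduced []" by (simp add: reduced_def)
lemma reduced_single[simp]: "reduced [x]" by (simp add: reduced_def)

lemma reduced_Cons2: "reduced (x # y # ys) \<longleftrightarrow> y \<noteq> inv_letter x \<and> reduced (y # ys)"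
  apply (simp add: reduced_def)
  apply (rule iffI)
   apply (intro conjI)
    apply (erule allE[of _ 0], simp)
   apply (intro allI impI)
   apply (erule_tac x="Suc i" in allE, simp)
  apply (intro allI impI)
  apply (case_tac i, auto)
  done

lemma reduced_Cons: "reduced (x # ys) \<longleftrightarrow> reduced ys \<and> (ys = [] \<or> hd ys \<noteq> inv_letter x)"
  by (cases ys) (auto simp: reduced_Cons2)

lemma reduced_tl: "reduced (x # ys) \<Longrightarrow> reduced ys"
  by (simp add: reduced_Cons)

lemma reduced_cons_red: "reduced z \<Longrightarrow> reduced (cons_red x z)"
  by (cases z) (auto simp: reduced_Cons)

lemma reduced_act[simp]: "reduced z \<Longrightarrow> reduced (act u z)"
  by (induction u) (auto intro: reduced_cons_red)

lemma reduced_red[simp]: "reduced (red w)"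
  by (simp add: red_act reduced_act)

lemma cons_red_reduced: "reduced (x # z) \<Longrightarrow> cons_red x z = x # z"
  by (cases z) (auto simp: reduced_Cons)

lemma red_reduced: "reduced w \<Longrightarrow> red w = w"
proof (induction w)
  case (Cons x w)
  then have "red w = w" by (simp add: reduced_Cons)
  then show ?case using Cons.prems by (simp add: red_Cons cons_red_reduced)
qed simp

lemma red_red[simp]: "red (red w) = red w"
  by (simp add: red_reduced)

lemma red_act_reduced'[simp]: "reduced z \<Longrightarrow> red (act u z) = act u z"
  by (simp add: red_reduced reduced_act)

lemma cons_red_inv: "reduced z \<Longrightarrow> cons_red x (cons_red (inv_letter x) z) = z"
proof (cases z)
  case (Cons y t)
  assume r: "reduced z"
  show ?thesis
  proof (cases "y = x")
    case True
    then have "cons_red (inv_letter x) z = t" using Cons by simp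
    moreover have "cons_red x t = x # t"
      using r Cons True by (intro cons_red_reduced) simp
    ultimately show ?thesis using Cons True by simp
  next
    case False
    then show ?thesis using Cons by simp
  qed
qed simp

lemma cons_red_inv': "reduced z \<Longrightarrow> cons_red (inv_letter x) (cons_red x z) = z"
  using cons_red_inv[of z "inv_letter x"] by simp

lemma act_red: "reduced z \<Longrightarrow> act (red u) z = act u z"
proof (induction u)
  case (Cons x u)
  show ?case
  proof (cases "\<exists>t. red u = inv_letter x # t")
    case True
    then obtain t where t: "red u = inv_letter x # t" by blast
    have rt: "reduced t" using reduced_red[of u] t by (simp add: reduced_Cons)
    have "red (x # u) = t" using t by (simp add: red_Cons)
    then have "act (red (x # u)) z = act t z" by simp
    also have "\<dots> = cons_red x (cons_red (inv_letter x) (act t z))"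
      by (simp add: cons_red_inv reduced_act Cons.prems)
    also have "\<dots> = cons_red x (act (red u) z)" using t by simp
    also have "\<dots> = act (x # u) z" using Cons by simp
    finally show ?thesis .
  next
    case False
    then have "red (x # u) = x # red u"
      by (cases "red u") (auto simp: red_Cons)
    then show ?thesis using Cons by simp
  qed
qed simp

lemma red_append: "red (u @ v) = act u (red v)"
  by (simp add: red_act act_append)

lemma red_append_red1[simp]: "red (red u @ v) = red (u @ v)"
  by (simp add: red_append act_red)

lemma red_append_red2[simp]: "red (u @ red v) = red (u @ v)"
  by (simp add: red_append)

lemma red_mid_red[simp]: "red (a @ red b @ c) = red (a @ b @ c)"
  by (simp add: red_append act_red)

lemma act_reduced_eq: "reduced z \<Longrightarrow> act u z = red (u @ z)"
  by (simp add: red_append red_reduced)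

lemma ginv_Nil[simp]: "ginv [] = []" by (simp add: ginv_def)
lemma ginv_Cons[simp]: "ginv (x # w) = ginv w @ [inv_letter x]" by (simp add: ginv_def)
lemma ginv_append[simp]: "ginv (u @ v) = ginv v @ ginv u" by (simp add: ginv_def rev_map)
lemma ginv_ginv[simp]: "ginv (ginv u) = u" by (simp add: ginv_def rev_map comp_def)
lemma length_ginv[simp]: "length (ginv u) = length u" by (simp add: ginv_def)
lemma ginv_single[simp]: "ginv [x] = [inv_letter x]" by simp
lemma ginv_eq_Nil[simp]: "ginv u = [] \<longleftrightarrow> u = []" by (simp add: ginv_def)
lemma ginv_inj[simp]: "ginv u = ginv v \<longleftrightarrow> u = v" by (metis ginv_ginv)

lemma act_inv_cancel: "reduced z \<Longrightarrow> act (u @ ginv u) z = z"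
proof (induction u arbitrary: z)
  case (Cons x u)
  have "act ((x # u) @ ginv (x # u)) z = cons_red x (act (u @ ginv u) (cons_red (inv_letter x) z))"
    by (simp add: act_append)
  also have "\<dots> = cons_red x (cons_red (inv_letter x) z)"
    using Cons by (simp add: reduced_cons_red)
  also have "\<dots> = z" using Cons.prems by (simp add: cons_red_inv)
  finally show ?case .
qed simp

lemma act_inv_cancel': "reduced z \<Longrightarrow> act (ginv u @ u) z = z"
  using act_inv_cancel[of z "ginv u"] by simp

lemma act_cancel1[simp]: "reduced z \<Longrightarrow> act u (act (ginv u) z) = z"
  using act_inv_cancel[of z u] by (simp add: act_append)

lemma act_cancel2[simp]: "reduced z \<Longrightarrow> act (ginv u) (act u z) = z"
  using act_inv_cancel'[of z u] by (simp add: act_append)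

lemma red_inv_cancel[simp]: "red (u @ ginv u) = []" "red (ginv u @ u) = []"
  by (simp_all add: red_act act_inv_cancel act_inv_cancel')

lemma red_mid_cancel[simp]: "red (a @ u @ ginv u @ b) = red (a @ b)"
  "red (a @ ginv u @ u @ b) = red (a @ b)"
  by (simp_all add: red_append act_append)

lemma red_mid_cancel2[simp]: "red (u @ ginv u @ b) = red b"
  "red (ginv u @ u @ b) = red b"
  using red_mid_cancel[of "[]"] by simp_all

lemma red_mid_cancel3[simp]: "red (a @ u @ ginv u) = red a"
  "red (a @ ginv u @ u) = red a"
  using red_mid_cancel[of a _ "[]"] by simp_all

lemma reduced_snoc: "reduced (ys @ [x]) \<longleftrightarrow> reduced ys \<and> (ys = [] \<or> x \<noteq> inv_letter (last ys))"
proof (induction ys)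
  case (Cons y ys)
  then show ?case by (cases ys) (auto simp: reduced_Cons)
qed simp

lemma reduced_ginv[simp]: "reduced (ginv u) \<longleftrightarrow> reduced u"
proof -
  have lg: "u \<noteq> [] \<Longrightarrow> last (ginv u) = inv_letter (hd u)" for u
    by (cases u) (auto simp: ginv_def)
  have "reduced u \<Longrightarrow> reduced (ginv u)" for u
  proof (induction u)
    case (Cons x u)
    then have "reduced u" "reduced (ginv u)" by (auto simp add: reduced_Cons)
    with Cons.prems show ?case
      by (cases "u = []") (auto simp: reduced_snoc reduced_Cons lg)
  qed simp
  then show ?thesis by (metis ginv_ginv)
qed

lemma red_ginv: "red (ginv u) = ginv (red u)"
proof -
  have "red (ginv u) = red (ginv u @ red u @ ginv (red u))"
    by simp
  also have "\<dots> = red (ginv u @ u @ ginv (red u))"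
    by (simp add: red_append act_red act_append)
  also have "\<dots> = red (ginv (red u))" by simp
  also have "\<dots> = ginv (red u)" by (simp add: red_reduced)
  finally show ?thesis .
qed

lemma red_single[simp]: "red [x] = [x]" by (simp add: red_reduced)

lemma gmult_assoc: "gmult (gmult u v) w = gmult u (gmult v w)"
  by (simp add: gmult_def)

lemma gmult_red: "gmult u v = red (u @ v)" by (simp add: gmult_def)

lemma reduced_gmult[simp]: "reduced (gmult u v)" by (simp add: gmult_def)

section \<open>Endomorphisms phi\<close>

abbreviation MM :: "letter list \<Rightarrow> letter list \<Rightarrow> letter list \<Rightarrow> letter list" where
  "MM x y w \<equiv> concat (map (limg x y) w)"

lemma limg_inv: "limg x y (inv_letter l) = ginv (limg x y l)"
  by (cases l; cases "fst l"; auto simp: inv_letter_def)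

lemma MM_ginv: "MM x y (ginv w) = ginv (MM x y w)"
  by (induction w) (auto simp: limg_inv)

lemma red_MM_cons_red: "red (MM x y (cons_red l r)) = red (limg x y l @ MM x y r)"
proof (cases r)
  case (Cons z t)
  show ?thesis
  proof (cases "z = inv_letter l")
    case True
    then show ?thesis using Cons by (simp add: limg_inv)
  qed (use Cons in simp)
qed simp

lemma phi_red[simp]: "phi x y (red w) = phi x y w"
proof (induction w)
  case (Cons l w)
  have "phi x y (red (l # w)) = red (MM x y (cons_red l (red w)))"
    by (simp add: phi_def red_Cons)
  also have "\<dots> = red (limg x y l @ MM x y (red w))" by (rule red_MM_cons_red)
  also have "\<dots> = red (limg x y l @ MM x y w)"
    using Cons by (metis phi_def red_append_red2)
  finally show ?case by (simp add: phi_def)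
qed simp

lemma reduced_phi[simp]: "reduced (phi x y w)" by (simp add: phi_def)

lemma phi_append: "phi x y (u @ v) = gmult (phi x y u) (phi x y v)"
  by (simp add: phi_def gmult_def)

lemma phi_append': "phi x y (u @ v) = red (phi x y u @ phi x y v)"
  by (simp add: phi_def)

lemma phi_ginv: "phi x y (ginv w) = ginv (phi x y w)"
  by (simp add: phi_def MM_ginv red_ginv)

lemma phi_Nil[simp]: "phi x y [] = []" by (simp add: phi_def)

lemma phi_single[simp]: "phi x y [l] = red (limg x y l)" by (simp add: phi_def)

lemma phi_ga[simp]: "phi x y ga = red x" by (simp add: ga_def)
lemma phi_gb[simp]: "phi x y gb = red y" by (simp add: gb_def)

lemma red_concat_map_red: "red (concat (map (\<lambda>l. red (f l)) w)) = red (concat (map f w))"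
proof (induction w)
  case (Cons l w)
  have "red (concat (map (\<lambda>l. red (f l)) (l # w))) = red (red (f l) @ red (concat (map (\<lambda>l. red (f l)) w)))"
    by simp
  also have "\<dots> = red (f l @ red (concat (map f w)))" using Cons by simp
  finally show ?case by simp
qed simp

lemma MM_concat: "MM x y (concat ws) = concat (map (MM x y) ws)"
  by (induction ws) auto

lemma phi_comp_apply: "phi x y (phi x' y' w) = phi (phi x y x') (phi x y y') w"
proof -
  have "phi x y (phi x' y' w) = red (MM x y (MM x' y' w))"
    by (simp add: phi_def[of x' y'] phi_red) (simp add: phi_def)
  also have "\<dots> = red (concat (map (\<lambda>l. MM x y (limg x' y' l)) w))"
    by (simp add: MM_concat comp_def)
  also have "\<dots> = red (concat (map (\<lambda>l. red (MM x y (limg x' y' l))) w))"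
    by (simp add: red_concat_map_red)
  also have "\<dots> = red (concat (map (\<lambda>l. limg (phi x y x') (phi x y y') l) w))"
  proof -
    have "red (MM x y (limg x' y' l)) = limg (phi x y x') (phi x y y') l" for l
      by (cases l; cases "fst l") (auto simp: phi_ginv[unfolded phi_def] phi_def)
    then show ?thesis by simp
  qed
  finally show ?thesis by (simp add: phi_def)
qed

lemma phi_comp: "phi x y \<circ> phi x' y' = phi (phi x y x') (phi x y y')"
  by (rule ext) (simp add: phi_comp_apply)

lemma limg_ga_gb: "limg ga gb l = [l]"
  by (cases l; cases "fst l") (auto simp: ga_def gb_def inv_letter_def)

lemma idA_apply: "idA w = red w"
proof -
  have "MM ga gb w = w" by (induction w) (simp_all add: limg_ga_gb)
  then show ?thesis by (simp add: idA_def phi_def)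
qed

lemma phi_comp_idA[simp]: "phi x y \<circ> idA = phi x y"
  by (rule ext) (simp add: idA_apply)

lemma idA_comp_phi[simp]: "idA \<circ> phi x y = phi x y"
  by (rule ext) (simp add: idA_apply red_reduced)

lemma phi_red_args: "phi (red x) (red y) = phi x y"
proof (rule ext)
  fix w
  have "phi (red x) (red y) w = red (concat (map (\<lambda>l. red (limg x y l)) w))"
  proof -
    have "limg (red x) (red y) = (\<lambda>l. red (limg x y l))"
    proof
      fix l :: letter show "limg (red x) (red y) l = red (limg x y l)"
        by (cases l; cases "fst l") (auto simp: red_ginv)
    qed
    then show ?thesis by (simp add: phi_def)
  qed
  then show "phi (red x) (red y) w = phi x y w" by (simp add: red_concat_map_red phi_def)
qed

lemma phi_eq_iff: "reduced x \<Longrightarrow> reduced y \<Longrightarrow> reduced x' \<Longrightarrow> reduced y' \<Longrightarrow>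
   phi x y = phi x' y' \<longleftrightarrow> x = x' \<and> y = y'"
  by (metis phi_ga phi_gb red_reduced)

lemma lam_apply: "lam w u = red (ginv w @ u @ w)"
  by (simp add: lam_def gmult_def)

lemma lam_phi: "lam w = phi (lam w ga) (lam w gb)"
proof (rule ext)
  fix u
  have "red (concat (map (\<lambda>l. ginv w @ [l] @ w) u)) = red (ginv w @ u @ w)"
  proof (induction u)
    case (Cons l u)
    have "red (concat (map (\<lambda>l. ginv w @ [l] @ w) (l # u)))
        = act (ginv w @ [l] @ w) (red (concat (map (\<lambda>l. ginv w @ [l] @ w) u)))"
      by (simp add: red_append[symmetric])
    also have "\<dots> = act (ginv w @ [l] @ w) (red (ginv w @ u @ w))" using Cons by simp
    also have "\<dots> = red ((ginv w @ [l]) @ w @ ginv w @ (u @ w))" by (simp add: act_reduced_eq) (simp add: red_append red_Cons)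
    also have "\<dots> = red (ginv w @ (l # u) @ w)" by (subst red_mid_cancel) simp
    finally show ?case .
  qed simp
  moreover have "limg (lam w ga) (lam w gb) = (\<lambda>l. red (ginv w @ [l] @ w))"
  proof
    fix l :: letter show "limg (lam w ga) (lam w gb) l = red (ginv w @ [l] @ w)"
    by (cases l; cases "fst l") (auto simp: lam_apply red_ginv[symmetric] ga_def gb_def inv_letter_def)
  qed
  ultimately show "lam w u = phi (lam w ga) (lam w gb) u"
    unfolding phi_def by (simp only: red_concat_map_red lam_apply)
qed


section \<open>Cancellation\<close>

fun lcp :: "'a list \<Rightarrow> 'a list \<Rightarrow> nat" where
  "lcp (x # xs) (y # ys) = (if x = y then Suc (lcp xs ys) else 0)"
| "lcp _ _ = 0"

lemma lcp_le: "lcp xs ys \<le> length xs" "lcp xs ys \<le> length ys"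
  by (induction xs ys rule: lcp.induct) auto

lemma lcp_take: "take (lcp xs ys) xs = take (lcp xs ys) ys"
  by (induction xs ys rule: lcp.induct) auto

lemma lcp_take_min: "lcp (take k xs) ys = min k (lcp xs ys)"
proof (induction xs ys arbitrary: k rule: lcp.induct)
  case (1 x xs y ys)
  then show ?case by (cases k) auto
qed auto

definition canc :: "letter list \<Rightarrow> letter list \<Rightarrow> nat" where
  "canc u v = lcp (ginv u) v"

lemma canc_le: "canc u v \<le> length u" "canc u v \<le> length v"
  using lcp_le[of "ginv u" v] by (auto simp: canc_def)

lemma ginv_drop: "ginv (drop d u) = take (length u - d) (ginv u)"
  by (simp add: ginv_def rev_drop flip: drop_map)

lemma ginv_take: "ginv (take d u) = drop (length u - d) (ginv u)"
  by (simp add: ginv_def rev_take flip: take_map)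

lemma canc_drop: "canc (drop d u) v = min (length u - d) (canc u v)"
  by (simp add: canc_def ginv_drop lcp_take_min)

lemma canc_snoc: "canc (u @ [x]) v = (case v of [] \<Rightarrow> 0 | z # t \<Rightarrow> if z = inv_letter x then Suc (canc u t) else 0)"
  by (cases v) (auto simp: canc_def)

lemma reduced_append: "reduced (xs @ ys) \<Longrightarrow> reduced xs \<and> reduced ys"
proof (induction xs)
  case (Cons x xs)
  then show ?case by (auto simp: reduced_Cons)
qed simp

lemma reduced_concat3: "reduced (A @ B) \<Longrightarrow> reduced (B @ C) \<Longrightarrow> B \<noteq> [] \<Longrightarrow> reduced (A @ B @ C)"
proof (induction A)
  case (Cons a A)
  then have "reduced (A @ B @ C)" by (simp add: reduced_Cons)
  moreover have "hd (A @ B @ C) = hd (A @ B)" using Cons.prems(3) by (cases A) auto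
  ultimately show ?case using Cons.prems(1) Cons.prems(3) by (auto simp: reduced_Cons)
qed simp

lemma red_Cons_inv[simp]: "red (x # inv_letter x # t) = red t" "red (inv_letter x # x # t) = red t"
  by (simp_all add: red_Cons cons_red_inv cons_red_inv')

lemma red_split: "reduced u \<Longrightarrow> reduced v \<Longrightarrow>
   red (u @ v) = take (length u - canc u v) u @ drop (canc u v) v"
proof (induction u arbitrary: v rule: rev_induct)
  case Nil
  then show ?case by (simp add: red_reduced canc_def)
next
  case (snoc x u)
  have ru: "reduced u" using snoc.prems(1) reduced_append by blast
  show ?case
  proof (cases "\<exists>t. v = inv_letter x # t")
    case True
    then obtain t where v: "v = inv_letter x # t" by blast
    have rt: "reduced t" using snoc.prems(2) v by (simp add: reduced_Cons)
    have "red ((u @ [x]) @ v) = act u t" using v snoc.prems rt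
      by (simp add: red_append act_append red_reduced)
    also have "\<dots> = red (u @ t)" using rt by (simp add: act_reduced_eq)
    also have "\<dots> = take (length u - canc u t) u @ drop (canc u t) t"
      using snoc.IH[OF ru rt] .
    finally show ?thesis using v by (simp add: canc_snoc)
  next
    case False
    then have c0: "canc (u @ [x]) v = 0" by (cases v) (auto simp: canc_snoc)
    have xv: "reduced (x # v)" using False snoc.prems(2)
      by (cases v) (auto simp: reduced_Cons)
    have "canc u (x # v) = 0"
    proof (cases u rule: rev_cases)
      case (snoc u' z)
      then have "reduced ((u' @ [z]) @ [x])" using snoc.prems(1) by simp
      then have "x \<noteq> inv_letter z" by (simp only: reduced_snoc) simp
      then show ?thesis using snoc by (auto simp: canc_def)
    qed (simp add: canc_def)
    then have "red (u @ x # v) = u @ x # v"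
      using snoc.IH[OF ru xv] by simp
    then show ?thesis using c0 by simp
  qed
qed

lemma length_red_split: "reduced u \<Longrightarrow> reduced v \<Longrightarrow>
   length (red (u @ v)) + 2 * canc u v = length u + length v"
  using red_split[of u v] canc_le[of u v] by simp

lemma drop_canc: "drop (length u - canc u v) u = ginv (take (canc u v) v)"
proof -
  have "take (canc u v) (ginv u) = take (canc u v) v"
    unfolding canc_def by (rule lcp_take)
  then have "ginv (drop (length u - canc u v) u) = take (canc u v) v"
    using canc_le[of u v] by (simp add: ginv_drop)
  then show ?thesis by (metis ginv_ginv)
qed

lemma take_canc: "take (canc u v) (ginv u) = take (canc u v) v"
  unfolding canc_def by (rule lcp_take)

lemma reduced_p_ginv_p: "reduced (p @ ginv p) \<Longrightarrow> p = []"
proof (cases p rule: rev_cases)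
  case (snoc p' z)
  assume "reduced (p @ ginv p)"
  then have "reduced (p' @ ([z, inv_letter z] @ ginv p'))"
    using snoc by (simp add: ginv_def)
  then have "reduced ([z, inv_letter z] @ ginv p')" using reduced_append by blast
  then have "reduced [z, inv_letter z]" using reduced_append by blast
  then show ?thesis by (simp add: reduced_Cons)
qed simp

lemma canc_self: "reduced v \<Longrightarrow> v \<noteq> [] \<Longrightarrow> 2 * canc v v < length v"
proof (rule ccontr)
  assume r: "reduced v" and ne: "v \<noteq> []" and "\<not> 2 * canc v v < length v"
  then have k: "length v \<le> 2 * canc v v" by simp
  let ?k = "canc v v"
  have tk: "take ?k (ginv v) = take ?k v" by (rule take_canc)
  have nth_eq: "i < ?k \<Longrightarrow> inv_letter (v ! (length v - 1 - i)) = v ! i" for i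
  proof -
    assume i: "i < ?k"
    then have "take ?k (ginv v) ! i = take ?k v ! i" using tk by simp
    moreover have "i < length v" using i canc_le[of v v] by simp
    ultimately show ?thesis using i by (simp add: ginv_def rev_nth)
  qed
  show False
  proof (cases "even (length v)")
    case True
    define i where "i = length v div 2 - 1"
    have "length v \<noteq> 0" using ne by simp
    then have l2: "length v \<ge> 2" using True by presburger
    have i1: "i < ?k" "Suc i < length v" using l2 k unfolding i_def by presburger+
    have "length v - 1 - i = Suc i" using l2 True unfolding i_def by presburger
    then have "v ! Suc i = inv_letter (v ! i)"
      using nth_eq[OF i1(1)] by (metis inv_letter_inv)
    then show False using r i1(2) by (simp add: reduced_def)
  next
    case False
    define i where "i = length v div 2"
    have i1: "i < ?k" using False k unfolding i_def by presburger
    have "length v - 1 - i = i" using False unfolding i_def by presburger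
    then show False using nth_eq[OF i1] by simp
  qed
qed

lemma reduced_take: "reduced xs \<Longrightarrow> reduced (take n xs)"
  using reduced_append[of "take n xs" "drop n xs"] by simp

lemma reduced_drop: "reduced xs \<Longrightarrow> reduced (drop n xs)"
  using reduced_append[of "take n xs" "drop n xs"] by simp

lemma reduced_limg: "reduced x \<Longrightarrow> reduced y \<Longrightarrow> reduced (limg x y l)"
  by (cases l; cases "fst l") auto

lemma phi_single_reduced: "reduced x \<Longrightarrow> reduced y \<Longrightarrow> phi x y [l] = limg x y l"
  by (simp add: red_reduced reduced_limg)

section \<open>The middle-letter lemma\<close>

lemma middle_lemma:
  assumes rx: "reduced x" and ry: "reduced y"
    and H3: "\<And>l m r. m \<noteq> inv_letter l \<Longrightarrow> r \<noteq> inv_letter m \<Longrightarrow>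
       canc (limg x y l) (limg x y m) + canc (limg x y m) (limg x y r) < length (limg x y m)"
    and rs: "reduced s"
  shows "length s \<le> length (phi x y s)"
proof -
  let ?X = "limg x y"
  have rX: "reduced (?X l)" for l using rx ry by (rule reduced_limg)
  have claim: "s \<noteq> [] \<longrightarrow> reduced s \<longrightarrow> (\<exists>A d. phi x y s = A @ drop d (?X (last s)) \<and>
      length s \<le> length A + 1 \<and>
      (\<forall>r. r \<noteq> inv_letter (last s) \<longrightarrow> d + canc (?X (last s)) (?X r) < length (?X (last s))))"
    for s
  proof (induction s rule: rev_induct)
    case Nil
    then show ?case by simp
  next
    case (snoc r s0)
    show ?case
    proof (intro impI)
      assume rs: "reduced (s0 @ [r])"
      show "\<exists>A d. phi x y (s0 @ [r]) = A @ drop d (?X (last (s0 @ [r]))) \<and>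
        length (s0 @ [r]) \<le> length A + 1 \<and>
        (\<forall>r'. r' \<noteq> inv_letter (last (s0 @ [r])) \<longrightarrow>
           d + canc (?X (last (s0 @ [r]))) (?X r') < length (?X (last (s0 @ [r]))))"
      proof (cases "s0 = []")
        case True
        show ?thesis
        proof (intro exI conjI allI impI)
          show "phi x y (s0 @ [r]) = [] @ drop 0 (?X (last (s0 @ [r])))"
            using True by (simp add: red_reduced rX)
          show "length (s0 @ [r]) \<le> length [] + 1" using True by simp
          fix r' assume "r' \<noteq> inv_letter (last (s0 @ [r]))"
          then show "0 + canc (?X (last (s0 @ [r]))) (?X r') < length (?X (last (s0 @ [r])))"
            using H3[of r r r'] True by simp
        qed
      next
        case False
        let ?m = "last s0"
        have rs0: "reduced s0" using rs reduced_append by blast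
        have rm: "r \<noteq> inv_letter ?m" using rs False by (simp add: reduced_snoc)
        obtain A d where A: "phi x y s0 = A @ drop d (?X ?m)" and lA: "length s0 \<le> length A + 1"
          and bd: "\<And>r. r \<noteq> inv_letter ?m \<Longrightarrow> d + canc (?X ?m) (?X r) < length (?X ?m)"
          using snoc.IH False rs0 by blast
        define B where "B = drop d (?X ?m)"
        define c where "c = canc (?X ?m) (?X r)"
        have bdr: "d + c < length (?X ?m)" using bd[OF rm] by (simp add: c_def)
        have cB: "canc B (?X r) = c" unfolding B_def c_def using bdr canc_drop
          by (simp add: c_def)
        have rB: "reduced B" unfolding B_def by (rule reduced_drop[OF rX])
        define B' where "B' = take (length B - c) B"
        have B'ne: "B' \<noteq> []" using bdr by (simp add: B'_def B_def)
        have sp: "red (B @ ?X r) = B' @ drop c (?X r)"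
          using red_split[OF rB rX] cB by (simp add: B'_def)
        have rAB: "reduced (A @ B)" using A reduced_phi B_def by metis
        have "A @ B' = take (length A + length B') (A @ B)" by (simp add: B'_def)
        then have rAB': "reduced (A @ B')" using reduced_take[OF rAB] by metis
        have rB'C: "reduced (B' @ drop c (?X r))" using sp by (metis reduced_red)
        have "phi x y (s0 @ [r]) = red (phi x y s0 @ phi x y [r])" by (rule phi_append')
        also have "\<dots> = red (A @ B @ ?X r)"
          using A by (simp add: red_reduced rX B_def)
        also have "\<dots> = red (A @ red (B @ ?X r))" by simp
        also have "\<dots> = A @ B' @ drop c (?X r)"
          using sp reduced_concat3[OF rAB' rB'C B'ne] by (simp add: red_reduced)
        finally have eq: "phi x y (s0 @ [r]) = (A @ B') @ drop c (?X r)" by simp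
        show ?thesis
        proof (intro exI conjI allI impI)
          show "phi x y (s0 @ [r]) = (A @ B') @ drop c (?X (last (s0 @ [r])))" using eq by simp
          show "length (s0 @ [r]) \<le> length (A @ B') + 1" using lA B'ne by (cases B') simp_all
          fix r' assume "r' \<noteq> inv_letter (last (s0 @ [r]))"
          then show "c + canc (?X (last (s0 @ [r]))) (?X r') < length (?X (last (s0 @ [r])))"
            using H3[OF rm[unfolded], of r'] by (simp add: c_def)
        qed
      qed
    qed
  qed
  show ?thesis
  proof (cases "s = []")
    case False
    then obtain A d where A: "phi x y s = A @ drop d (?X (last s))" and lA: "length s \<le> length A + 1"
      and bd: "\<And>r. r \<noteq> inv_letter (last s) \<Longrightarrow> d + canc (?X (last s)) (?X r) < length (?X (last s))"
      using claim rs by blast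
    have "d < length (?X (last s))" using bd[of "last s"] by simp
    then show ?thesis using A lA by simp
  qed simp
qed


abbreviation "la \<equiv> (GA, False)"
abbreviation "lA \<equiv> (GA, True)"
abbreviation "lb \<equiv> (GB, False)"
abbreviation "lB \<equiv> (GB, True)"

definition "P1 = phi [la] [lb, la]"
definition "P2 = phi [la, lb] [lb]"
definition "P3 = phi [la] [la, lb]"
definition "P4 = phi [lb, la] [lb]"
definition "Q1 = phi [la] [lb, lA]"
definition "Q2 = phi [la, lB] [lb]"
definition "Q3 = phi [la] [lA, lb]"
definition "Q4 = phi [lB, la] [lb]"

definition E8 :: "(letter list \<Rightarrow> letter list) set" where
  "E8 = {P1, P2, P3, P4, Q1, Q2, Q3, Q4}"

definition mvimg :: "letter \<Rightarrow> letter list \<Rightarrow> gen \<Rightarrow> letter list" where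
  "mvimg l w g = (if g = fst l then (if snd l then ginv w else w) else [(g, False)])"

definition "Rm l m = phi (mvimg l [l, m] GA) (mvimg l [l, m] GB)"
definition "Lm l m = phi (mvimg l [m, l] GA) (mvimg l [m, l] GB)"

lemma letter_cases: "l = la \<or> l = lA \<or> l = lb \<or> l = lB"
  by (cases l; cases "fst l"; auto)

lemma Rm_E8: "fst l \<noteq> fst m \<Longrightarrow> Rm l m \<in> E8"
  using letter_cases[of l] letter_cases[of m]
  by (auto simp: Rm_def E8_def mvimg_def inv_letter_def P1_def P2_def P3_def P4_def
      Q1_def Q2_def Q3_def Q4_def)

lemma Lm_E8: "fst l \<noteq> fst m \<Longrightarrow> Lm l m \<in> E8"
  using letter_cases[of l] letter_cases[of m]
  by (auto simp: Lm_def E8_def mvimg_def inv_letter_def P1_def P2_def P3_def P4_def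
      Q1_def Q2_def Q3_def Q4_def)

lemma limg_mvimg: "fst z = fst l \<Longrightarrow> limg (mvimg l w GA) (mvimg l w GB) z = (if z = l then w else ginv w)"
  by (cases z; cases l; cases "fst l"; auto simp: mvimg_def)

lemma limg_mvimg_other: "fst z \<noteq> fst l \<Longrightarrow> limg (mvimg l w GA) (mvimg l w GB) z = [z]"
  by (cases z; cases l; cases "fst l"; cases "fst z"; auto simp: mvimg_def inv_letter_def)

lemma reduced_mvimg: "reduced w \<Longrightarrow> reduced (mvimg l w g)"
  by (auto simp: mvimg_def)

lemma reduced_two: "fst l \<noteq> fst m \<Longrightarrow> reduced [l, m]"
  by (auto simp: reduced_Cons inv_letter_def)

lemma length_red_le: "length (red w) \<le> length w"
proof (induction w)
  case (Cons x w)
  then show ?case by (cases "red w") (auto simp: red_Cons)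
qed simp

lemma limg_map: "(\<And>w. F (ginv w) = ginv (F w)) \<Longrightarrow>
    limg (F x0) (F y0) z = F (limg x0 y0 z)"
  by (cases z; cases "fst z") auto

lemma N_general:
  assumes F: "\<And>w. F (ginv w) = ginv (F w)" and "fst l \<noteq> fst m"
  shows "length (F x0) + length (F y0) = length (F (limg x0 y0 l)) + length (F (limg x0 y0 m))"
  using assms(2) letter_cases[of l] letter_cases[of m]
  by (auto simp: F)

lemma lam_ginv: "lam p (ginv w) = ginv (lam p w)"
  by (simp add: lam_apply red_ginv[symmetric])

lemma same_gen: "fst l = fst m \<Longrightarrow> m \<noteq> inv_letter l \<Longrightarrow> m = l"
  by (cases l; cases m) (auto simp: inv_letter_def)

lemma other_gen: "fst l \<noteq> fst m \<Longrightarrow> fst r \<noteq> fst m \<Longrightarrow> r = l \<or> r = inv_letter l"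
  by (cases l; cases m; cases r; cases "fst l"; cases "fst m"; cases "fst r") (auto simp: inv_letter_def)

lemma N_letters: "fst l \<noteq> fst m \<Longrightarrow> length (limg x y l) + length (limg x y m) = length x + length y"
  using letter_cases[of l] letter_cases[of m] by auto

definition NN :: "(letter list \<Rightarrow> letter list) \<Rightarrow> nat" where
  "NN g = length (g ga) + length (g gb)"

lemma NN_move:
  assumes "reduced x0" "reduced y0" "fst l \<noteq> fst m"
  shows "NN (lam p \<circ> phi x y \<circ> phi x0 y0) =
     length (lam p (phi x y (limg x0 y0 l))) + length (lam p (phi x y (limg x0 y0 m)))"
proof -
  have "NN (lam p \<circ> phi x y \<circ> phi x0 y0) = length (lam p (phi x y x0)) + length (lam p (phi x y y0))"
    using assms by (simp add: NN_def red_reduced)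
  also have "\<dots> = length (lam p (phi x y (limg x0 y0 l))) + length (lam p (phi x y (limg x0 y0 m)))"
    by (rule N_general[where F="\<lambda>w. lam p (phi x y w)"]) (simp_all add: phi_ginv lam_ginv assms)
  finally show ?thesis .
qed

lemma lam_Nil[simp]: "lam [] w = red w"
  by (simp add: lam_apply)

lemma lam_Nil_phi: "lam [] (phi x y w) = phi x y w"
  by (simp add: lam_apply red_reduced)

lemma phi_two: "phi x y [l, m] = red (limg x y l @ limg x y m)"
  by (simp add: phi_def)

lemma Rm_NN:
  assumes rx: "reduced x" and ry: "reduced y" and lm: "fst l \<noteq> fst m"
  shows "NN (lam [] \<circ> phi x y \<circ> Rm l m) = length (red (limg x y l @ limg x y m)) + length (limg x y m)"
proof -
  have r: "reduced (mvimg l [l, m] g)" for g by (rule reduced_mvimg[OF reduced_two[OF lm]])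
  show ?thesis unfolding Rm_def
    by (subst NN_move[OF r r lm]) (simp add: lam_Nil_phi limg_mvimg limg_mvimg_other lm lm[symmetric] phi_two
        red_reduced reduced_limg rx ry)
qed

lemma Lm_NN:
  assumes rx: "reduced x" and ry: "reduced y" and lm: "fst l \<noteq> fst m"
  shows "NN (lam p \<circ> phi x y \<circ> Lm l m) = length (lam p (red (limg x y m @ limg x y l))) + length (lam p (limg x y m))"
proof -
  have r: "reduced (mvimg l [m, l] g)" for g by (rule reduced_mvimg[OF reduced_two]) (use lm in auto)
  show ?thesis unfolding Lm_def
    by (subst NN_move[OF r r lm]) (simp add: limg_mvimg limg_mvimg_other lm lm[symmetric] phi_two
        red_reduced reduced_limg rx ry)
qed

lemma ga_F2[simp]: "ga \<in> F2" and gb_F2[simp]: "gb \<in> F2" and Nil_F2[simp]: "[] \<in> F2"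
  by (simp_all add: F2_def ga_def gb_def)

theorem nielsen_step:
  assumes rx: "reduced x" and ry: "reduced y" and inj: "inj_on (phi x y) F2"
    and sa: "ga \<in> phi x y ` F2" and sb: "gb \<in> phi x y ` F2"
    and big: "2 < length x + length y"
  shows "\<exists>e\<in>E8. \<exists>p. reduced p \<and> NN (lam p \<circ> phi x y \<circ> e) < length x + length y"
proof (rule ccontr)
  assume no: "\<not> ?thesis"
  let ?X = "limg x y"
  have rX: "reduced (?X l)" for l by (rule reduced_limg[OF rx ry])
  have xne: "x \<noteq> []"
  proof
    assume "x = []"
    then have "phi x y ga = phi x y []" by simp
    then have "ga = []" using inj_onD[OF inj _ ga_F2 Nil_F2] by blast
    then show False by (simp add: ga_def)
  qed
  have yne: "y \<noteq> []"
  proof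
    assume "y = []"
    then have "phi x y gb = phi x y []" by simp
    then have "gb = []" using inj_onD[OF inj _ gb_F2 Nil_F2] by blast
    then show False by (simp add: gb_def)
  qed
  have ne: "?X l \<noteq> []" for l using xne yne by (cases l; cases "fst l") auto
  have A: "length (?X l) \<le> length (red (?X l @ ?X m))" if lm: "fst l \<noteq> fst m" for l m
  proof (rule ccontr)
    assume "\<not> ?thesis"
    then have "NN (lam [] \<circ> phi x y \<circ> Rm l m) < length x + length y"
      using Rm_NN[OF rx ry lm] N_letters[OF lm, of x y] by simp
    then show False using no Rm_E8[OF lm] by fastforce
  qed
  have B: "length (?X m) \<le> length (red (?X l @ ?X m))" if lm: "fst l \<noteq> fst m" for l m
  proof (rule ccontr)
    assume nt: "\<not> ?thesis"
    have ml: "fst m \<noteq> fst l" using lm by simp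
    have "NN (lam [] \<circ> phi x y \<circ> Lm m l) = length (red (?X l @ ?X m)) + length (?X l)"
      using Lm_NN[OF rx ry ml, of "[]"] by (simp add: red_reduced rX)
    then have "NN (lam [] \<circ> phi x y \<circ> Lm m l) < length x + length y"
      using nt N_letters[OF lm, of x y] by simp
    then show False using no Lm_E8[OF ml] by fastforce
  qed
  have cb: "2 * canc (?X l) (?X m) \<le> length (?X m) \<and> 2 * canc (?X l) (?X m) \<le> length (?X l)"
    if lm: "fst l \<noteq> fst m" for l m
    using A[OF lm] B[OF lm] length_red_split[OF rX rX, of l m] by simp
  have cs: "2 * canc (?X l) (?X m) < length (?X m)" if "fst l = fst m" "m \<noteq> inv_letter l" for l m
    using same_gen[OF that] canc_self[OF rX ne] by simp
  show False
  proof (cases "\<forall>l m r. m \<noteq> inv_letter l \<longrightarrow> r \<noteq> inv_letter m \<longrightarrow>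
       canc (?X l) (?X m) + canc (?X m) (?X r) < length (?X m)")
    case True
    have single: "\<exists>l. ?X l = g" if g: "g \<in> phi x y ` F2" "length g = 1" for g
    proof -
      obtain s where s: "s \<in> F2" "phi x y s = g" using g by auto
      have "length s \<le> 1" using middle_lemma[OF rx ry _ , of s] True s g by (simp add: F2_def)
      moreover have "s \<noteq> []" using s g by auto
      ultimately obtain l where "s = [l]" by (cases s) auto
      then have "?X l = g" using s by (auto simp: red_reduced rX)
      then show ?thesis by blast
    qed
    obtain l where l: "?X l = ga" using single[OF sa] by (auto simp: ga_def)
    obtain l' where l': "?X l' = gb" using single[OF sb] by (auto simp: gb_def)
    have "fst l \<noteq> fst l'"
    proof
      assume "fst l = fst l'"
      then have "l' = l \<or> l' = inv_letter l" by (cases l; cases l') (auto simp: inv_letter_def)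
      moreover have "?X (inv_letter l) \<noteq> gb" by (simp only: limg_inv l) (simp add: ga_def gb_def inv_letter_def)
      ultimately show False using l l' by (auto simp: ga_def gb_def)
    qed
    then have "length x + length y = 2" using N_letters[of l l' x y] l l' by (simp add: ga_def gb_def)
    then show False using big by simp
  next
    case False
    then obtain l m r where ml: "m \<noteq> inv_letter l" and rm: "r \<noteq> inv_letter m"
      and ge: "length (?X m) \<le> canc (?X l) (?X m) + canc (?X m) (?X r)" by auto
    define c1 where "c1 = canc (?X l) (?X m)"
    define c2 where "c2 = canc (?X m) (?X r)"
    have b1: "2 * c1 \<le> length (?X m)" "fst l = fst m \<Longrightarrow> 2 * c1 < length (?X m)"
      using cb[of l m] cs[OF _ ml] unfolding c1_def by (cases "fst l = fst m"; force)+
    have b2': "fst r = fst m \<Longrightarrow> 2 * c2 < length (?X m)"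
    proof -
      assume "fst r = fst m"
      then have "r = m" using same_gen[of m r] rm by simp
      then show ?thesis using canc_self[OF rX ne] by (simp add: c2_def)
    qed
    have b2: "2 * c2 \<le> length (?X m)" "fst r = fst m \<Longrightarrow> 2 * c2 < length (?X m)"
      using cb[of m r] b2' unfolding c2_def by (cases "fst r = fst m"; force)+
    have lm: "fst l \<noteq> fst m" and rm': "fst r \<noteq> fst m" and e1: "2 * c1 = length (?X m)"
      and e2: "2 * c2 = length (?X m)"
      using b1 b2 ge by (fastforce simp: c1_def[symmetric] c2_def[symmetric])+
    have c12: "c2 = c1" using e1 e2 by simp
    define k where "k = c1"
    define p where "p = take k (?X m)"
    define q where "q = drop k (?X m)"
    have lp: "length p = k" and lq: "length q = k" using e1 by (auto simp: p_def q_def k_def)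
    have vm: "?X m = p @ q" by (simp add: p_def q_def)
    have Xmpos: "0 < length (?X m)" using ne[of m] by simp
    then have kpos: "0 < k" using e1 unfolding k_def by linarith
    have dl: "drop (length (?X l) - k) (?X l) = ginv p"
      using drop_canc[of "?X l" "?X m"] by (simp add: k_def c1_def p_def)
    have tr: "take k (?X r) = ginv q"
    proof -
      have "take k (ginv (?X m)) = take k (?X r)"
        using take_canc[of "?X m" "?X r"] c12 by (simp add: c2_def k_def)
      then show ?thesis using vm lq by simp
    qed
    have lXl: "2 * k \<le> length (?X l)" using cb[OF lm] by (simp add: k_def c1_def)
    have "r = l \<or> r = inv_letter l" using other_gen[OF lm rm'] .
    then show False
    proof
      assume "r = inv_letter l"
      then have "take k (ginv (?X l)) = ginv q" using tr by (simp add: limg_inv)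
      moreover have "take k (ginv (?X l)) = ginv (drop (length (?X l) - k) (?X l))"
        using lXl by (simp add: ginv_drop)
      ultimately have "p = ginv q" using dl by simp
      then have "reduced (p @ ginv p)" using rX[of m] vm by simp
      then have "p = []" by (rule reduced_p_ginv_p)
      then show False using lp kpos by simp
    next
      assume rl: "r = l"
      define mid where "mid = drop k (take (length (?X l) - k) (?X l))"
      have lmid: "length mid = length (?X l) - 2 * k" using lXl by (simp add: mid_def)
      have "?X l = take k (?X l) @ mid @ drop (length (?X l) - k) (?X l)"
      proof -
        have tt: "take k (take (length (?X l) - k) (?X l)) = take k (?X l)"
          using lXl by (simp add: min_def) linarith
        have "take (length (?X l) - k) (?X l) = take k (?X l) @ mid"
          unfolding mid_def by (metis append_take_drop_id tt)
        then show ?thesis by (metis append_assoc append_take_drop_id)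
      qed
      then have Xl: "?X l = ginv q @ mid @ ginv p" using tr rl dl by simp
      have "NN (lam p \<circ> phi x y \<circ> Lm l m) = length (lam p (red (?X m @ ?X l))) + length (lam p (?X m))"
        by (rule Lm_NN[OF rx ry lm])
      also have "lam p (red (?X m @ ?X l)) = red mid"
        by (simp add: lam_apply Xl vm)
      also have "lam p (?X m) = red (q @ p)"
        by (simp add: lam_apply vm)
      finally have "NN (lam p \<circ> phi x y \<circ> Lm l m) \<le> length mid + length (q @ p)"
        using length_red_le[of mid] length_red_le[of "q @ p"] by linarith
      also have "\<dots> < length x + length y"
        using lmid lp lq N_letters[OF lm, of x y] kpos lXl Xmpos by (simp del: length_greater_0_conv)
      finally show False using no Lm_E8[OF lm] reduced_take[OF rX[of m]] by (fastforce simp: p_def)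
    qed
  qed
qed


lemmas conc = phi_def red_def inv_letter_def ga_def gb_def

lemma red_tail_red[simp]: "red (a @ b @ red c) = red (a @ b @ c)"
  "red (a @ b @ d @ red c) = red (a @ b @ d @ c)"
  by (simp_all add: red_append)

lemma F2_reduced[simp]: "w \<in> F2 \<longleftrightarrow> reduced w" by (simp add: F2_def)

lemma aut_phi: "f \<in> AutF2 \<Longrightarrow> f = phi (f ga) (f gb) \<and> reduced (f ga) \<and> reduced (f gb) \<and> bij_betw f F2 F2"
  by (auto simp: AutF2_def red_reduced)

lemma aut_phiE:
  assumes "f \<in> AutF2"
  obtains x y where "f = phi x y" "reduced x" "reduced y" "bij_betw (phi x y) F2 F2"
  using assms by (auto simp: AutF2_def)

lemma phi_in_F2: "phi x y ` F2 \<subseteq> F2" by auto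

lemma aut_crit:
  assumes r: "reduced x" "reduced y" "reduced x'" "reduced y'"
    and c1: "phi x y \<circ> phi x' y' = idA" and c2: "phi x' y' \<circ> phi x y = idA"
  shows "phi x y \<in> AutF2"
proof -
  have "bij_betw (phi x y) F2 F2"
  proof (rule bij_betw_byWitness[where f'="phi x' y'"])
    show "\<forall>a\<in>F2. phi x' y' (phi x y a) = a"
    proof
      fix a assume "a \<in> F2"
      have "phi x' y' (phi x y a) = idA a" using c2 by (metis comp_apply)
      then show "phi x' y' (phi x y a) = a" using \<open>a \<in> F2\<close> by (simp add: idA_apply red_reduced)
    qed
    show "\<forall>a\<in>F2. phi x y (phi x' y' a) = a"
    proof
      fix a assume "a \<in> F2"
      have "phi x y (phi x' y' a) = idA a" using c1 by (metis comp_apply)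
      then show "phi x y (phi x' y' a) = a" using \<open>a \<in> F2\<close> by (simp add: idA_apply red_reduced)
    qed
  qed auto
  then show ?thesis using r by (auto simp: AutF2_def)
qed

lemma aut_comp: "f \<in> AutF2 \<Longrightarrow> g \<in> AutF2 \<Longrightarrow> f \<circ> g \<in> AutF2"
proof -
  assume f: "f \<in> AutF2" and g: "g \<in> AutF2"
  from f obtain x y where fx: "f = phi x y" "reduced x" "reduced y" "bij_betw (phi x y) F2 F2"
    by (rule aut_phiE)
  from g obtain x' y' where gx: "g = phi x' y'" "reduced x'" "reduced y'" "bij_betw (phi x' y') F2 F2"
    by (rule aut_phiE)
  have "f \<circ> g = phi (phi x y x') (phi x y y')" using fx gx by (simp add: phi_comp)
  moreover have "bij_betw (f \<circ> g) F2 F2" using fx gx by (auto intro: bij_betw_trans)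
  ultimately show ?thesis unfolding AutF2_def
    by (intro CollectI exI[of _ "phi x y x'"] exI[of _ "phi x y y'"]) auto
qed

lemma idA_conc: "idA = phi [la] [lb]" by (simp add: idA_def ga_def gb_def)

lemma idA_aut: "idA \<in> AutF2"
proof -
  have c: "phi [la] [lb] \<circ> phi [la] [lb] = idA" by (simp add: phi_comp idA_conc)
  show ?thesis using aut_crit[OF _ _ _ _ c c] unfolding idA_conc by simp
qed

lemma lam_comp: "lam p \<circ> lam q = lam (red (q @ p))"
  by (rule ext) (simp add: lam_apply red_ginv[symmetric])

lemma lam_Nil_idA: "lam [] = idA"
  by (rule ext) (simp add: idA_apply)

lemma lam_aut: "reduced p \<Longrightarrow> lam p \<in> AutF2"
proof -
  assume rp: "reduced p"
  have "lam p = phi (lam p ga) (lam p gb)" by (rule lam_phi)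
  moreover have "phi (lam p ga) (lam p gb) \<in> AutF2"
  proof (rule aut_crit[of _ _ "lam (ginv p) ga" "lam (ginv p) gb"])
    show "phi (lam p ga) (lam p gb) \<circ> phi (lam (ginv p) ga) (lam (ginv p) gb) = idA"
      by (simp flip: lam_phi add: lam_comp lam_Nil_idA)
    show "phi (lam (ginv p) ga) (lam (ginv p) gb) \<circ> phi (lam p ga) (lam p gb) = idA"
      by (simp flip: lam_phi add: lam_comp lam_Nil_idA)
  qed (auto simp: lam_apply)
  ultimately show ?thesis by simp
qed

lemma comp_phi_lam: "phi x y \<circ> lam w = lam (phi x y w) \<circ> phi x y"
  by (rule ext) (simp add: lam_apply phi_append' phi_ginv)

lemma lam_comp_aut: "f \<in> AutF2 \<Longrightarrow> reduced w \<Longrightarrow> \<exists>v. reduced v \<and> lam w \<circ> f = f \<circ> lam v"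
proof -
  assume f: "f \<in> AutF2" and w: "reduced w"
  from f obtain x y where fx: "f = phi x y" "reduced x" "reduced y" "bij_betw (phi x y) F2 F2"
    by (rule aut_phiE)
  have "w \<in> phi x y ` F2" using fx(4) w by (simp add: bij_betw_def)
  then obtain v where v: "v \<in> F2" "phi x y v = w" by blast
  then show ?thesis using fx comp_phi_lam[of x y v] by auto
qed


lemma phi_exI: "reduced a \<Longrightarrow> reduced b \<Longrightarrow> \<exists>x y. phi a b = phi x y \<and> reduced x \<and> reduced y"
  by blast

lemma E8_phi: "e \<in> E8 \<Longrightarrow> \<exists>x y. e = phi x y \<and> reduced x \<and> reduced y"
  by (auto simp: E8_def P1_def P2_def P3_def P4_def Q1_def Q2_def Q3_def Q4_def
      intro!: phi_exI simp: reduced_Cons inv_letter_def)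


lemma PQ_inv: "P1 \<circ> Q1 = idA" "Q1 \<circ> P1 = idA" "P2 \<circ> Q2 = idA" "Q2 \<circ> P2 = idA"
   "P3 \<circ> Q3 = idA" "Q3 \<circ> P3 = idA" "P4 \<circ> Q4 = idA" "Q4 \<circ> P4 = idA"
  by (simp_all add: P1_def P2_def P3_def P4_def Q1_def Q2_def Q3_def Q4_def phi_comp idA_conc)
     (simp_all add: conc)

lemma E8_inv: "e \<in> E8 \<Longrightarrow> \<exists>e'\<in>E8. e \<circ> e' = idA \<and> e' \<circ> e = idA"
  unfolding E8_def using PQ_inv by blast

lemma E8_aut: "e \<in> E8 \<Longrightarrow> e \<in> AutF2"
proof -
  assume e: "e \<in> E8"
  obtain x y where xy: "e = phi x y" "reduced x" "reduced y" using E8_phi[OF e] by blast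
  obtain e' where e': "e' \<in> E8" "e \<circ> e' = idA" "e' \<circ> e = idA" using E8_inv[OF e] by blast
  obtain x' y' where xy': "e' = phi x' y'" "reduced x'" "reduced y'" using E8_phi[OF e'(1)] by blast
  show ?thesis using aut_crit[of x y x' y'] xy xy' e' by simp
qed


lemma reduced_ga[simp]: "reduced ga" and reduced_gb[simp]: "reduced gb"
  by (simp_all add: ga_def gb_def)

lemma aut_of_order4:
  assumes rx: "reduced x" and ry: "reduced y"
    and o4: "phi x y \<circ> phi x y \<circ> phi x y \<circ> phi x y = idA"
  shows "phi x y \<in> AutF2"
proof -
  define x3 where "x3 = phi x y (phi x y x)"
  define y3 where "y3 = phi x y (phi x y y)"
  have g3: "phi x y \<circ> phi x y \<circ> phi x y = phi x3 y3"
    by (simp add: phi_comp x3_def y3_def phi_comp_apply red_reduced rx ry)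
  show ?thesis
  proof (rule aut_crit[OF rx ry _ _ _ _])
    show "reduced x3" "reduced y3" by (simp_all add: x3_def y3_def)
    show "phi x y \<circ> phi x3 y3 = idA" using o4 g3 by (simp add: comp_assoc)
    show "phi x3 y3 \<circ> phi x y = idA" using o4 g3 by (metis comp_assoc)
  qed
qed

lemma reduced_two_iff: "reduced [l, m] \<longleftrightarrow> m \<noteq> inv_letter l"
  by (simp add: reduced_Cons)

lemma Psi_char: "PsiS = {phi [l1] [l2] | l1 l2. fst l1 \<noteq> fst l2}"
proof
  show "PsiS \<subseteq> {phi [l1] [l2] | l1 l2. fst l1 \<noteq> fst l2}"
  proof
    fix f assume f: "f \<in> PsiS"
    then have fa: "f \<in> AutF2" and l: "length (f ga) = 1" "length (f gb) = 1" by (auto simp: PsiS_def)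
    obtain l1 where l1: "f ga = [l1]" using l(1) by (cases "f ga") auto
    obtain l2 where l2: "f gb = [l2]" using l(2) by (cases "f gb") auto
    have ff: "f = phi [l1] [l2]" using aut_phi[OF fa] l1 l2 by simp
    have bij: "bij_betw f F2 F2" using aut_phi[OF fa] by simp
    have "fst l1 \<noteq> fst l2"
    proof
      assume "fst l1 = fst l2"
      then have "l2 = l1 \<or> l2 = inv_letter l1" by (cases l1; cases l2) (auto simp: inv_letter_def)
      then show False
      proof
        assume "l2 = l1"
        then have "f ga = f gb" using l1 l2 by simp
        then have "ga = gb" using inj_onD[OF bij_betw_imp_inj_on[OF bij] _ ga_F2 gb_F2] by blast
        then show False by (simp add: ga_def gb_def)
      next
        assume e: "l2 = inv_letter l1"
        have r: "[la, lb] \<in> F2" by (simp add: reduced_Cons inv_letter_def)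
        have "f [la, lb] = f []" using ff e by (simp add: phi_def)
        then have "[la, lb] = []" using bij_betw_imp_inj_on[OF bij] r Nil_F2 by (blast dest: inj_onD)
        then show False by simp
      qed
    qed
    then show "f \<in> {phi [l1] [l2] | l1 l2. fst l1 \<noteq> fst l2}" using ff by blast
  qed
next
  show "{phi [l1] [l2] | l1 l2. fst l1 \<noteq> fst l2} \<subseteq> PsiS"
  proof safe
    fix l1 l2 :: letter assume d: "fst l1 \<noteq> fst l2"
    have "phi [l1] [l2] \<circ> phi [l1] [l2] \<circ> phi [l1] [l2] \<circ> phi [l1] [l2] = idA"
      using d letter_cases[of l1] letter_cases[of l2]
      by (auto simp: phi_comp idA_conc) (simp_all add: conc)
    then have "phi [l1] [l2] \<in> AutF2" using aut_of_order4[of "[l1]" "[l2]"] by simp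
    then show "phi [l1] [l2] \<in> PsiS" by (simp add: PsiS_def)
  qed
qed

lemma Psi_aut: "f \<in> PsiS \<Longrightarrow> f \<in> AutF2" by (simp add: PsiS_def)

lemma idA_Psi: "idA \<in> PsiS"
  unfolding Psi_char idA_conc by auto

section \<open>Generation\<close>

definition Gen :: "(letter list \<Rightarrow> letter list) set" where
  "Gen = PsiS \<union> E8 \<union> LambdaS"

lemma Gen_phi: "g \<in> Gen \<Longrightarrow> \<exists>x y. g = phi x y"
  unfolding Gen_def LambdaS_def
proof (elim UnE)
  assume "g \<in> PsiS" then show ?thesis using aut_phi[OF Psi_aut] by blast
next
  assume "g \<in> E8" then show ?thesis using E8_phi by blast
next
  assume "g \<in> {lam w |w. w \<in> F2}" then show ?thesis using lam_phi by blast
qed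

lemma mstar_snoc:
  assumes X: "\<And>g. g \<in> X \<Longrightarrow> \<exists>x y. g = phi x y"
  shows "m \<in> mstar X \<Longrightarrow> g \<in> X \<Longrightarrow> m \<circ> g \<in> mstar X"
proof (induction m rule: mstar.induct)
  case unit
  obtain x y where g: "g = phi x y" using X[OF unit] by blast
  have "idA \<circ> g = g \<circ> idA" using g by simp
  moreover have "g \<circ> idA \<in> mstar X" by (rule mstar.step[OF unit mstar.unit])
  ultimately show ?case by metis
next
  case (step f m)
  then have "f \<circ> (m \<circ> g) \<in> mstar X" by (blast intro: mstar.step)
  then show ?case by (metis comp_assoc)
qed

lemma aut_ne: "f \<in> AutF2 \<Longrightarrow> f ga \<noteq> [] \<and> f gb \<noteq> []"
proof -
  assume f: "f \<in> AutF2"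
  then have inj: "inj_on f F2" using aut_phi[OF f] bij_betw_imp_inj_on by blast
  have "f [] = []" using aut_phi[OF f] by (metis phi_Nil)
  then show ?thesis using inj_onD[OF inj, of ga "[]"] inj_onD[OF inj, of gb "[]"]
    by (auto simp: ga_def gb_def)
qed

theorem aut_gen: "f \<in> AutF2 \<Longrightarrow> f \<in> mstar Gen"
proof (induction "NN f" arbitrary: f rule: less_induct)
  case less
  obtain x y where fx: "f = phi x y" "reduced x" "reduced y" "bij_betw (phi x y) F2 F2"
    using aut_phiE[OF less.prems] by blast
  have NNf: "NN f = length x + length y" using fx by (simp add: NN_def red_reduced)
  have ne: "x \<noteq> []" "y \<noteq> []" using aut_ne[OF less.prems] fx by (simp_all add: red_reduced)
  show ?case
  proof (cases "length x + length y \<le> 2")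
    case True
    then have "length x = 1" "length y = 1" using ne by (cases x; cases y; auto)+
    then have "f \<in> PsiS" using less.prems fx by (simp add: PsiS_def red_reduced)
    then have "f \<circ> idA \<in> mstar Gen" by (auto intro: mstar.step mstar.unit simp: Gen_def)
    then show ?thesis using fx by simp
  next
    case False
    have inj: "inj_on (phi x y) F2" using fx(4) by (rule bij_betw_imp_inj_on)
    have im: "phi x y ` F2 = F2" using fx(4) by (simp add: bij_betw_def)
    obtain e p where e: "e \<in> E8" and p: "reduced p" and lt: "NN (lam p \<circ> phi x y \<circ> e) < length x + length y"
      using nielsen_step[OF fx(2) fx(3) inj _ _ ] im False by auto
    define f' where "f' = lam p \<circ> phi x y \<circ> e"
    have f'a: "f' \<in> AutF2" unfolding f'_def
      using aut_comp lam_aut[OF p] E8_aut[OF e] less.prems fx(1) by metis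
    have "f' \<in> mstar Gen" using less.hyps[OF _ f'a] lt NNf by (simp add: f'_def)
    obtain e' where e': "e' \<in> E8" "e \<circ> e' = idA" using E8_inv[OF e] by blast
    have "f' \<circ> e' \<in> mstar Gen" using mstar_snoc[OF Gen_phi \<open>f' \<in> mstar Gen\<close>] e' by (simp add: Gen_def)
    moreover have "lam (ginv p) \<in> Gen" using p by (auto simp: Gen_def LambdaS_def)
    ultimately have m: "lam (ginv p) \<circ> (f' \<circ> e') \<in> mstar Gen" by (rule mstar.step[rotated])
    have "lam (ginv p) \<circ> (f' \<circ> e') = (lam (ginv p) \<circ> lam p) \<circ> phi x y \<circ> (e \<circ> e')"
      by (simp add: f'_def comp_assoc)
    also have "\<dots> = f" using e' fx by (simp add: lam_comp lam_Nil_idA)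
    finally show ?thesis using m by simp
  qed
qed


lemma comm1: "P1 \<circ> phi [la] [lb] = phi [la] [lb] \<circ> P1"
  unfolding P1_def P1_def phi_comp by (simp add: conc)
lemma comm2: "P1 \<circ> phi [la] [lB] = phi [la] [lB] \<circ> Q3"
  unfolding P1_def Q3_def phi_comp by (simp add: conc)
lemma comm3: "P1 \<circ> phi [lA] [lb] = phi [lA] [lb] \<circ> Q1"
  unfolding P1_def Q1_def phi_comp by (simp add: conc)
lemma comm4: "P1 \<circ> phi [lA] [lB] = phi [lA] [lB] \<circ> P3"
  unfolding P1_def P3_def phi_comp by (simp add: conc)
lemma comm5: "P1 \<circ> phi [lb] [la] = phi [lb] [la] \<circ> P2"
  unfolding P1_def P2_def phi_comp by (simp add: conc)
lemma comm6: "P1 \<circ> phi [lb] [lA] = phi [lb] [lA] \<circ> Q2"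
  unfolding P1_def Q2_def phi_comp by (simp add: conc)
lemma comm7: "P1 \<circ> phi [lB] [la] = phi [lB] [la] \<circ> Q4"
  unfolding P1_def Q4_def phi_comp by (simp add: conc)
lemma comm8: "P1 \<circ> phi [lB] [lA] = phi [lB] [lA] \<circ> P4"
  unfolding P1_def P4_def phi_comp by (simp add: conc)
lemma comm9: "P2 \<circ> phi [la] [lb] = phi [la] [lb] \<circ> P2"
  unfolding P2_def P2_def phi_comp by (simp add: conc)
lemma comm10: "P2 \<circ> phi [la] [lB] = phi [la] [lB] \<circ> Q2"
  unfolding P2_def Q2_def phi_comp by (simp add: conc)
lemma comm11: "P2 \<circ> phi [lA] [lb] = phi [lA] [lb] \<circ> Q4"
  unfolding P2_def Q4_def phi_comp by (simp add: conc)
lemma comm12: "P2 \<circ> phi [lA] [lB] = phi [lA] [lB] \<circ> P4"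
  unfolding P2_def P4_def phi_comp by (simp add: conc)
lemma comm13: "P2 \<circ> phi [lb] [la] = phi [lb] [la] \<circ> P1"
  unfolding P2_def P1_def phi_comp by (simp add: conc)
lemma comm14: "P2 \<circ> phi [lb] [lA] = phi [lb] [lA] \<circ> Q3"
  unfolding P2_def Q3_def phi_comp by (simp add: conc)
lemma comm15: "P2 \<circ> phi [lB] [la] = phi [lB] [la] \<circ> Q1"
  unfolding P2_def Q1_def phi_comp by (simp add: conc)
lemma comm16: "P2 \<circ> phi [lB] [lA] = phi [lB] [lA] \<circ> P3"
  unfolding P2_def P3_def phi_comp by (simp add: conc)
lemma comm17: "P3 \<circ> phi [la] [lb] = phi [la] [lb] \<circ> P3"
  unfolding P3_def P3_def phi_comp by (simp add: conc)
lemma comm18: "P3 \<circ> phi [la] [lB] = phi [la] [lB] \<circ> Q1"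
  unfolding P3_def Q1_def phi_comp by (simp add: conc)
lemma comm19: "P3 \<circ> phi [lA] [lb] = phi [lA] [lb] \<circ> Q3"
  unfolding P3_def Q3_def phi_comp by (simp add: conc)
lemma comm20: "P3 \<circ> phi [lA] [lB] = phi [lA] [lB] \<circ> P1"
  unfolding P3_def P1_def phi_comp by (simp add: conc)
lemma comm21: "P3 \<circ> phi [lb] [la] = phi [lb] [la] \<circ> P4"
  unfolding P3_def P4_def phi_comp by (simp add: conc)
lemma comm22: "P3 \<circ> phi [lb] [lA] = phi [lb] [lA] \<circ> Q4"
  unfolding P3_def Q4_def phi_comp by (simp add: conc)
lemma comm23: "P3 \<circ> phi [lB] [la] = phi [lB] [la] \<circ> Q2"
  unfolding P3_def Q2_def phi_comp by (simp add: conc)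
lemma comm24: "P3 \<circ> phi [lB] [lA] = phi [lB] [lA] \<circ> P2"
  unfolding P3_def P2_def phi_comp by (simp add: conc)
lemma comm25: "P4 \<circ> phi [la] [lb] = phi [la] [lb] \<circ> P4"
  unfolding P4_def P4_def phi_comp by (simp add: conc)
lemma comm26: "P4 \<circ> phi [la] [lB] = phi [la] [lB] \<circ> Q4"
  unfolding P4_def Q4_def phi_comp by (simp add: conc)
lemma comm27: "P4 \<circ> phi [lA] [lb] = phi [lA] [lb] \<circ> Q2"
  unfolding P4_def Q2_def phi_comp by (simp add: conc)
lemma comm28: "P4 \<circ> phi [lA] [lB] = phi [lA] [lB] \<circ> P2"
  unfolding P4_def P2_def phi_comp by (simp add: conc)
lemma comm29: "P4 \<circ> phi [lb] [la] = phi [lb] [la] \<circ> P3"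
  unfolding P4_def P3_def phi_comp by (simp add: conc)
lemma comm30: "P4 \<circ> phi [lb] [lA] = phi [lb] [lA] \<circ> Q1"
  unfolding P4_def Q1_def phi_comp by (simp add: conc)
lemma comm31: "P4 \<circ> phi [lB] [la] = phi [lB] [la] \<circ> Q3"
  unfolding P4_def Q3_def phi_comp by (simp add: conc)
lemma comm32: "P4 \<circ> phi [lB] [lA] = phi [lB] [lA] \<circ> P1"
  unfolding P4_def P1_def phi_comp by (simp add: conc)
lemma comm33: "Q1 \<circ> phi [la] [lb] = phi [la] [lb] \<circ> Q1"
  unfolding Q1_def Q1_def phi_comp by (simp add: conc)
lemma comm34: "Q1 \<circ> phi [la] [lB] = phi [la] [lB] \<circ> P3"
  unfolding Q1_def P3_def phi_comp by (simp add: conc)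
lemma comm35: "Q1 \<circ> phi [lA] [lb] = phi [lA] [lb] \<circ> P1"
  unfolding Q1_def P1_def phi_comp by (simp add: conc)
lemma comm36: "Q1 \<circ> phi [lA] [lB] = phi [lA] [lB] \<circ> Q3"
  unfolding Q1_def Q3_def phi_comp by (simp add: conc)
lemma comm37: "Q1 \<circ> phi [lb] [la] = phi [lb] [la] \<circ> Q2"
  unfolding Q1_def Q2_def phi_comp by (simp add: conc)
lemma comm38: "Q1 \<circ> phi [lb] [lA] = phi [lb] [lA] \<circ> P2"
  unfolding Q1_def P2_def phi_comp by (simp add: conc)
lemma comm39: "Q1 \<circ> phi [lB] [la] = phi [lB] [la] \<circ> P4"
  unfolding Q1_def P4_def phi_comp by (simp add: conc)
lemma comm40: "Q1 \<circ> phi [lB] [lA] = phi [lB] [lA] \<circ> Q4"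
  unfolding Q1_def Q4_def phi_comp by (simp add: conc)
lemma comm41: "Q2 \<circ> phi [la] [lb] = phi [la] [lb] \<circ> Q2"
  unfolding Q2_def Q2_def phi_comp by (simp add: conc)
lemma comm42: "Q2 \<circ> phi [la] [lB] = phi [la] [lB] \<circ> P2"
  unfolding Q2_def P2_def phi_comp by (simp add: conc)
lemma comm43: "Q2 \<circ> phi [lA] [lb] = phi [lA] [lb] \<circ> P4"
  unfolding Q2_def P4_def phi_comp by (simp add: conc)
lemma comm44: "Q2 \<circ> phi [lA] [lB] = phi [lA] [lB] \<circ> Q4"
  unfolding Q2_def Q4_def phi_comp by (simp add: conc)
lemma comm45: "Q2 \<circ> phi [lb] [la] = phi [lb] [la] \<circ> Q1"
  unfolding Q2_def Q1_def phi_comp by (simp add: conc)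
lemma comm46: "Q2 \<circ> phi [lb] [lA] = phi [lb] [lA] \<circ> P3"
  unfolding Q2_def P3_def phi_comp by (simp add: conc)
lemma comm47: "Q2 \<circ> phi [lB] [la] = phi [lB] [la] \<circ> P1"
  unfolding Q2_def P1_def phi_comp by (simp add: conc)
lemma comm48: "Q2 \<circ> phi [lB] [lA] = phi [lB] [lA] \<circ> Q3"
  unfolding Q2_def Q3_def phi_comp by (simp add: conc)
lemma comm49: "Q3 \<circ> phi [la] [lb] = phi [la] [lb] \<circ> Q3"
  unfolding Q3_def Q3_def phi_comp by (simp add: conc)
lemma comm50: "Q3 \<circ> phi [la] [lB] = phi [la] [lB] \<circ> P1"
  unfolding Q3_def P1_def phi_comp by (simp add: conc)
lemma comm51: "Q3 \<circ> phi [lA] [lb] = phi [lA] [lb] \<circ> P3"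
  unfolding Q3_def P3_def phi_comp by (simp add: conc)
lemma comm52: "Q3 \<circ> phi [lA] [lB] = phi [lA] [lB] \<circ> Q1"
  unfolding Q3_def Q1_def phi_comp by (simp add: conc)
lemma comm53: "Q3 \<circ> phi [lb] [la] = phi [lb] [la] \<circ> Q4"
  unfolding Q3_def Q4_def phi_comp by (simp add: conc)
lemma comm54: "Q3 \<circ> phi [lb] [lA] = phi [lb] [lA] \<circ> P4"
  unfolding Q3_def P4_def phi_comp by (simp add: conc)
lemma comm55: "Q3 \<circ> phi [lB] [la] = phi [lB] [la] \<circ> P2"
  unfolding Q3_def P2_def phi_comp by (simp add: conc)
lemma comm56: "Q3 \<circ> phi [lB] [lA] = phi [lB] [lA] \<circ> Q2"
  unfolding Q3_def Q2_def phi_comp by (simp add: conc)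
lemma comm57: "Q4 \<circ> phi [la] [lb] = phi [la] [lb] \<circ> Q4"
  unfolding Q4_def Q4_def phi_comp by (simp add: conc)
lemma comm58: "Q4 \<circ> phi [la] [lB] = phi [la] [lB] \<circ> P4"
  unfolding Q4_def P4_def phi_comp by (simp add: conc)
lemma comm59: "Q4 \<circ> phi [lA] [lb] = phi [lA] [lb] \<circ> P2"
  unfolding Q4_def P2_def phi_comp by (simp add: conc)
lemma comm60: "Q4 \<circ> phi [lA] [lB] = phi [lA] [lB] \<circ> Q2"
  unfolding Q4_def Q2_def phi_comp by (simp add: conc)
lemma comm61: "Q4 \<circ> phi [lb] [la] = phi [lb] [la] \<circ> Q3"
  unfolding Q4_def Q3_def phi_comp by (simp add: conc)
lemma comm62: "Q4 \<circ> phi [lb] [lA] = phi [lb] [lA] \<circ> P1"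
  unfolding Q4_def P1_def phi_comp by (simp add: conc)
lemma comm63: "Q4 \<circ> phi [lB] [la] = phi [lB] [la] \<circ> P3"
  unfolding Q4_def P3_def phi_comp by (simp add: conc)
lemma comm64: "Q4 \<circ> phi [lB] [lA] = phi [lB] [lA] \<circ> Q1"
  unfolding Q4_def Q1_def phi_comp by (simp add: conc)

lemmas comms = comm1 comm2 comm3 comm4 comm5 comm6 comm7 comm8 comm9 comm10 comm11 comm12 comm13 comm14 comm15 comm16 comm17 comm18 comm19 comm20 comm21 comm22 comm23 comm24 comm25 comm26 comm27 comm28 comm29 comm30 comm31 comm32 comm33 comm34 comm35 comm36 comm37 comm38 comm39 comm40 comm41 comm42 comm43 comm44 comm45 comm46 comm47 comm48 comm49 comm50 comm51 comm52 comm53 comm54 comm55 comm56 comm57 comm58 comm59 comm60 comm61 comm62 comm63 comm64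

lemma E8_Psi_comm:
  assumes g: "g \<in> E8" and psi: "psi \<in> PsiS"
  shows "\<exists>g'\<in>E8. g \<circ> psi = psi \<circ> g'"
proof -
  obtain l1 l2 where p: "psi = phi [l1] [l2]" "fst l1 \<noteq> fst l2" using psi unfolding Psi_char by blast
  show ?thesis
    using g p letter_cases[of l1] letter_cases[of l2]
    unfolding E8_def by (auto simp: comms)
qed

definition apow :: "int \<Rightarrow> letter list" where
  "apow k = (if 0 \<le> k then replicate (nat k) la else replicate (nat (-k)) lA)"

lemma reduced_replicate: "reduced (replicate n l)"
  by (induction n) (auto simp: reduced_Cons)

lemma reduced_apow[simp]: "reduced (apow k)"
  by (simp add: apow_def reduced_replicate)

lemma ginv_replicate: "ginv (replicate n l) = replicate n (inv_letter l)"
  by (induction n) (auto simp: replicate_append_same)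

lemma ginv_apow: "ginv (apow k) = apow (- k)"
  by (auto simp: apow_def ginv_replicate inv_letter_def)

lemma concat_replicate_single: "concat (replicate n [x]) = replicate n x"
  by (induction n) auto

lemma gpow_ga: "gpow ga k = apow k"
  by (auto simp: gpow_def apow_def ga_def concat_replicate_single red_reduced reduced_replicate inv_letter_def)

lemma gpow_la: "gpow [la] k = apow k"
  using gpow_ga by (simp add: ga_def)

lemma gpow_gb: "gpow gb 1 = [lb]" "gpow gb (-1) = [lB]"
  by (simp_all add: gpow_def gb_def inv_letter_def)

lemma apow_snoc_a: "red (apow m @ [la]) = apow (m + 1)"
proof (cases "0 \<le> m")
  case True
  then have "apow m @ [la] = apow (m + 1)"
    by (simp add: apow_def replicate_append_same nat_add_distrib flip: replicate_Suc)
  then show ?thesis by (simp add: red_reduced)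
next
  case False
  then obtain k where k: "nat (- m) = Suc k" by (cases "nat (-m)") auto
  have "apow m = replicate k lA @ [lA]" using False k by (simp add: apow_def replicate_append_same)
  then have "apow m @ [la] = replicate k lA @ [lA, la]" by simp
  then have "red (apow m @ [la]) = replicate k lA"
    using red_mid_cancel3[of "replicate k lA" "[lA]"] by (simp add: red_reduced reduced_replicate inv_letter_def)
  moreover have "apow (m + 1) = replicate k lA" using False k by (simp add: apow_def) arith
  ultimately show ?thesis by simp
qed

lemma apow_snoc_A: "red (apow m @ [lA]) = apow (m - 1)"
proof -
  have "red (apow m @ [lA]) = ginv (red ([la] @ ginv (apow m)))"
    by (simp add: red_ginv[symmetric] inv_letter_def)
  also have "\<dots> = ginv (red ([la] @ apow (- m)))" by (simp add: ginv_apow)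
  finally have e: "red (apow m @ [lA]) = ginv (red ([la] @ apow (- m)))" .
  show ?thesis
  proof (cases "m \<le> 0")
    case True
    moreover have "nat (1 - m) = Suc (nat (-m))" using True by simp
    ultimately have "[la] @ apow (-m) = apow (- m + 1)"
      by (simp add: apow_def)
    then show ?thesis using e by (simp add: red_reduced ginv_apow)
  next
    case False
    then obtain k where k: "nat m = Suc k" by (cases "nat m") auto
    have "[la] @ apow (-m) = [la, lA] @ replicate k lA" using False k by (simp add: apow_def)
    then have "red ([la] @ apow (-m)) = replicate k lA"
      using red_mid_cancel2[of "[la]" "replicate k lA"] by (simp add: red_reduced reduced_replicate inv_letter_def)
    moreover have "apow (1 - m) = replicate k lA" using False k by (simp add: apow_def) arith
    ultimately show ?thesis using e by (metis ginv_apow minus_diff_eq)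
  qed
qed

lemma apow_Cons_A: "red (lA # apow n) = apow (n - 1)"
proof -
  have "red (lA # apow n) = ginv (red (ginv (apow n) @ [la]))"
    by (simp add: red_ginv[symmetric] inv_letter_def)
  also have "\<dots> = ginv (apow (- n + 1))" by (simp add: ginv_apow apow_snoc_a)
  finally show ?thesis by (simp add: ginv_apow)
qed

lemma apow_Cons_a: "red (la # apow n) = apow (n + 1)"
proof -
  have "red (la # apow n) = ginv (red (ginv (apow n) @ [lA]))"
    by (simp add: red_ginv[symmetric] inv_letter_def)
  also have "\<dots> = ginv (apow (- n - 1))" by (simp add: ginv_apow apow_snoc_A)
  finally show ?thesis by (simp add: ginv_apow add.commute)
qed

lemma phi_apow_indep: "phi x y (apow k) = phi x y' (apow k)"
  by (simp add: phi_def apow_def inv_letter_def)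

lemma phi_la_apow: "phi [la] y (apow k) = apow k"
  by (auto simp: phi_def apow_def inv_letter_def concat_replicate_single red_reduced reduced_replicate)

lemma set_apow: "set (apow k) \<subseteq> {la, lA}"
  by (auto simp: apow_def)

lemma reduced_dl_word: "fst c = GB \<Longrightarrow> reduced (apow m @ [c] @ apow n)"
proof -
  assume c: "fst c = GB"
  have "reduced (apow m @ [c])"
  proof (cases "apow m = []")
    case False
    then have "last (apow m) \<in> {la, lA}" using set_apow[of m] last_in_set by blast
    then show ?thesis using c by (auto simp: reduced_snoc inv_letter_def)
  qed simp
  moreover have "reduced ([c] @ apow n)"
  proof (cases "apow n = []")
    case False
    then have "hd (apow n) \<in> {la, lA}" using set_apow[of n] hd_in_set by blast
    then show ?thesis using c by (auto simp: reduced_Cons inv_letter_def)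
  qed simp
  ultimately show ?thesis by (rule reduced_concat3) simp
qed

definition dl :: "int \<Rightarrow> int \<Rightarrow> letter \<Rightarrow> letter list \<Rightarrow> letter list" where
  "dl m n c = phi [la] (apow m @ [c] @ apow n)"

lemma Delta_char: "DeltaS = {dl m n c | m n c. c = lb \<or> c = lB}"
proof -
  have A1: "phi ga (gmult (gmult (gpow ga m) (gpow gb e)) (gpow ga n)) = dl m n (if e = 1 then lb else lB)"
    if "e \<in> {1, -1}" for m n and e :: int
  proof -
    have "fst (if e = 1 then lb else lB) = GB" by simp
    then have r: "reduced (apow m @ [if e = 1 then lb else lB] @ apow n)" by (rule reduced_dl_word)
    show ?thesis using that r by (auto simp: dl_def gmult_def gpow_la gpow_gb ga_def red_reduced)
  qed
  have A2: "dl m n c = phi ga (gmult (gmult (gpow ga m) (gpow gb (if c = lb then 1 else -1))) (gpow ga n))"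
    if "c = lb \<or> c = lB" for m n c
  proof -
    have "fst c = GB" using that by auto
    then have r: "reduced (apow m @ [c] @ apow n)" by (rule reduced_dl_word)
    show ?thesis using that r by (auto simp: dl_def gmult_def gpow_la gpow_gb ga_def red_reduced)
  qed
  show ?thesis
  proof
    show "DeltaS \<subseteq> {dl m n c | m n c. c = lb \<or> c = lB}"
    proof
      fix f assume "f \<in> DeltaS"
      then obtain m n e where e: "e \<in> {1, -1}" "f = phi ga (gmult (gmult (gpow ga m) (gpow gb e)) (gpow ga n))"
        unfolding DeltaS_def by blast
      then have "f = dl m n (if e = 1 then lb else lB)" using A1[OF e(1)] by simp
      then show "f \<in> {dl m n c | m n c. c = lb \<or> c = lB}" by auto
    qed
  next
    show "{dl m n c | m n c. c = lb \<or> c = lB} \<subseteq> DeltaS"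
    proof
      fix f assume "f \<in> {dl m n c | m n c. c = lb \<or> c = lB}"
      then obtain m n c where c: "c = lb \<or> c = lB" "f = dl m n c" by blast
      define e :: int where "e = (if c = lb then 1 else -1)"
      have "e \<in> {1, -1}" by (simp add: e_def)
      moreover have "f = phi ga (gmult (gmult (gpow ga m) (gpow gb e)) (gpow ga n))"
        using A2[OF c(1), of m n] c(2) by (simp add: e_def)
      ultimately show "f \<in> DeltaS" unfolding DeltaS_def by blast
    qed
  qed
qed


lemma red_Cons_red_in[simp]: "red (a @ x # red c) = red (a @ x # c)"
  by (simp add: red_append red_Cons)

lemma reduced_dl_word'[simp]: "fst c = GB \<Longrightarrow> reduced (apow m @ c # apow n)"
  using reduced_dl_word by simp

lemma apow_neg: "apow (- k) = ginv (apow k)"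
  by (simp add: ginv_apow)

lemma phi_Cons: "phi x y (c # w) = red (limg x y c @ phi x y w)"
  by (simp add: phi_def)

lemma comp_dl: "reduced x \<Longrightarrow> phi x y \<circ> dl m n c = phi x (red (phi x y (apow m) @ limg x y c @ phi x y (apow n)))"
  by (simp add: dl_def phi_comp red_reduced phi_append' phi_Cons)

lemma red_apow_cancel[simp]: "red (apow (- m) @ apow m @ b) = red b" "red (apow m @ apow (- m) @ b) = red b"
   "red (x # apow n @ apow (- n)) = [x]" "red (x # apow (- n) @ apow n) = [x]"
proof -
  show "red (apow (- m) @ apow m @ b) = red b" by (simp add: apow_neg)
  show "red (apow m @ apow (- m) @ b) = red b" by (simp add: apow_neg)
  show "red (x # apow n @ apow (- n)) = [x]" using red_mid_cancel3(1)[of "[x]" "apow n"] by (simp add: apow_neg)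
  show "red (x # apow (- n) @ apow n) = [x]" using red_mid_cancel3(2)[of "[x]" "apow n"] by (simp add: apow_neg)
qed

lemma dl_word_red: "fst c = GB \<Longrightarrow> red (apow m @ c # apow n) = apow m @ c # apow n"
  using reduced_dl_word[of c m n] by (simp add: red_reduced)

lemma Q1_dl: "Q1 \<circ> dl m n lb = dl m (n - 1) lb" "Q1 \<circ> dl m n lB = dl (m + 1) n lB"
proof -
  have "red (apow m @ lb # lA # apow n) = red (apow m @ lb # red (lA # apow n))" by simp
  also have "\<dots> = apow m @ lb # apow (n - 1)" by (simp add: apow_Cons_A dl_word_red)
  finally show "Q1 \<circ> dl m n lb = dl m (n - 1) lb"
    by (simp add: Q1_def comp_dl phi_la_apow inv_letter_def) (simp add: dl_def)
  have "red (apow m @ la # lB # apow n) = red (red (apow m @ [la]) @ lB # apow n)" by simp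
  also have "\<dots> = apow (m + 1) @ lB # apow n" by (simp add: apow_snoc_a dl_word_red)
  finally show "Q1 \<circ> dl m n lB = dl (m + 1) n lB"
    by (simp add: Q1_def comp_dl phi_la_apow inv_letter_def) (simp add: dl_def)
qed

lemma Q3_dl: "Q3 \<circ> dl m n lb = dl (m - 1) n lb" "Q3 \<circ> dl m n lB = dl m (n + 1) lB"
proof -
  have "red (apow m @ lA # lb # apow n) = red (red (apow m @ [lA]) @ lb # apow n)" by simp
  also have "\<dots> = apow (m - 1) @ lb # apow n" by (simp add: apow_snoc_A dl_word_red)
  finally show "Q3 \<circ> dl m n lb = dl (m - 1) n lb"
    by (simp add: Q3_def comp_dl phi_la_apow inv_letter_def) (simp add: dl_def)
  have "red (apow m @ lB # la # apow n) = red (apow m @ lB # red (la # apow n))" by simp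
  also have "\<dots> = apow m @ lB # apow (n + 1)" by (simp add: apow_Cons_a dl_word_red)
  finally show "Q3 \<circ> dl m n lB = dl m (n + 1) lB"
    by (simp add: Q3_def comp_dl phi_la_apow inv_letter_def) (simp add: dl_def)
qed

lemma comp_dl_flip: "reduced x \<Longrightarrow> c = lb \<or> c = lB \<Longrightarrow>
    phi x y \<circ> dl m n c = phi x (ginv y) \<circ> dl m n (inv_letter c)"
  by (auto simp: comp_dl phi_apow_indep[of x y _ "ginv y"] inv_letter_def)

lemma iotab_P2: "phi [la, lB] [lB] = phi [la] [lB] \<circ> P2"
  unfolding P2_def phi_comp by (simp add: conc)

lemma iotab_P4: "phi [lB, la] [lB] = phi [la] [lB] \<circ> P4"
  unfolding P4_def phi_comp by (simp add: conc)

lemma Q2_dl: "c = lb \<or> c = lB \<Longrightarrow> Q2 \<circ> dl m n c = phi [la] [lB] \<circ> P2 \<circ> dl m n (inv_letter c)"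
  unfolding Q2_def by (subst comp_dl_flip) (auto simp: iotab_P2[symmetric] reduced_Cons inv_letter_def)

lemma Q4_dl: "c = lb \<or> c = lB \<Longrightarrow> Q4 \<circ> dl m n c = phi [la] [lB] \<circ> P4 \<circ> dl m n (inv_letter c)"
  unfolding Q4_def by (subst comp_dl_flip) (auto simp: iotab_P4[symmetric] reduced_Cons inv_letter_def)

lemma dl_aut: "c = lb \<or> c = lB \<Longrightarrow> dl m n c \<in> AutF2"
proof -
  assume c: "c = lb \<or> c = lB"
  show ?thesis
  proof (cases "c = lb")
    case True
    have e1: "dl m n lb \<circ> dl (- m) (- n) lb = idA"
      by (simp add: dl_def[of m n] comp_dl red_reduced reduced_dl_word phi_la_apow idA_conc)
    have e2: "dl (- m) (- n) lb \<circ> dl m n lb = idA"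
      using red_apow_cancel(2)[of "- m"] red_apow_cancel(4)[of _ "- n"]
      by (simp add: dl_def[of "- m" "- n"] comp_dl red_reduced reduced_dl_word phi_la_apow idA_conc)
    show ?thesis using aut_crit[OF _ _ _ _ e1[unfolded dl_def] e2[unfolded dl_def]] True
      by (simp add: dl_def reduced_dl_word)
  next
    case False
    then have cB: "c = lB" using c by simp
    have e1: "dl m n lB \<circ> dl n m lB = idA"
      by (simp add: dl_def[of m n] comp_dl red_reduced reduced_dl_word phi_la_apow ginv_apow
          inv_letter_def idA_conc)
    have e2: "dl n m lB \<circ> dl m n lB = idA"
      by (simp add: dl_def[of n m] comp_dl red_reduced reduced_dl_word phi_la_apow ginv_apow
          inv_letter_def idA_conc)
    show ?thesis using aut_crit[OF _ _ _ _ e1[unfolded dl_def] e2[unfolded dl_def]] cB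
      by (simp add: dl_def reduced_dl_word)
  qed
qed

lemma Delta_aut: "d \<in> DeltaS \<Longrightarrow> d \<in> AutF2"
  unfolding Delta_char using dl_aut by blast


lemma lam_conc: "lam w = phi (red (ginv w @ [la] @ w)) (red (ginv w @ [lb] @ w))"
  using lam_phi[of w] by (simp add: lam_apply ga_def gb_def)

lemma tab1: "Q1 \<circ> P2 = lam [lA] \<circ> phi [lb] [lA] \<circ> P1"
  unfolding Q1_def P2_def P1_def lam_conc phi_comp by (simp add: conc)
lemma tab2: "Q1 \<circ> P3 = lam [lA]"
  unfolding Q1_def P3_def lam_conc phi_comp by (simp add: conc)
lemma tab3: "Q1 \<circ> P4 = lam [lB] \<circ> phi [lb] [lA] \<circ> P1"
  unfolding Q1_def P4_def P1_def lam_conc phi_comp by (simp add: conc)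
lemma tab4: "Q2 \<circ> P1 = lam [lB] \<circ> phi [lB] [la] \<circ> P2"
  unfolding Q2_def P1_def P2_def lam_conc phi_comp by (simp add: conc)
lemma tab5: "Q2 \<circ> P3 = lam [lA] \<circ> phi [lB] [la] \<circ> P2"
  unfolding Q2_def P3_def P2_def lam_conc phi_comp by (simp add: conc)
lemma tab6: "Q2 \<circ> P4 = lam [lB]"
  unfolding Q2_def P4_def lam_conc phi_comp by (simp add: conc)
lemma tab7: "Q3 \<circ> P1 = lam [la]"
  unfolding Q3_def P1_def lam_conc phi_comp by (simp add: conc)
lemma tab8: "Q3 \<circ> P2 = lam [] \<circ> phi [lb] [lA] \<circ> P1"
  unfolding Q3_def P2_def P1_def lam_conc phi_comp by (simp add: conc)
lemma tab9: "Q3 \<circ> P4 = lam [lB, la] \<circ> phi [lb] [lA] \<circ> P1"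
  unfolding Q3_def P4_def P1_def lam_conc phi_comp by (simp add: conc)
lemma tab10: "Q4 \<circ> P1 = lam [] \<circ> phi [lB] [la] \<circ> P2"
  unfolding Q4_def P1_def P2_def lam_conc phi_comp by (simp add: conc)
lemma tab11: "Q4 \<circ> P2 = lam [lb]"
  unfolding Q4_def P2_def lam_conc phi_comp by (simp add: conc)
lemma tab12: "Q4 \<circ> P3 = lam [lA, lb] \<circ> phi [lB] [la] \<circ> P2"
  unfolding Q4_def P3_def P2_def lam_conc phi_comp by (simp add: conc)

section \<open>First decomposition\<close>

lemma aut_idA_left: "f \<in> AutF2 \<Longrightarrow> idA \<circ> f = f"
  using aut_phi by (metis idA_comp_phi)

lemma aut_idA_right: "f \<in> AutF2 \<Longrightarrow> f \<circ> idA = f"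
  using aut_phi by (metis phi_comp_idA)

lemma PhiS_eq: "PhiS = {P1, P2, P3, P4}"
  by (simp add: PhiS_def P1_def P2_def P3_def P4_def gmult_def ga_def gb_def red_reduced reduced_Cons
      inv_letter_def)

lemma mstar_aut: assumes X: "\<And>g. g \<in> X \<Longrightarrow> g \<in> AutF2" shows "m \<in> mstar X \<Longrightarrow> m \<in> AutF2"
  by (induction m rule: mstar.induct) (use idA_aut aut_comp X in blast)+

lemma PhiS_aut: "g \<in> PhiS \<Longrightarrow> g \<in> AutF2"
  using E8_aut by (auto simp: PhiS_eq E8_def)

lemma mstar_PhiS_aut: "m \<in> mstar PhiS \<Longrightarrow> m \<in> AutF2"
  by (rule mstar_aut[OF PhiS_aut])

definition inT1 :: "(letter list \<Rightarrow> letter list) \<Rightarrow> bool" where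
  "inT1 f \<longleftrightarrow> (\<exists>w psi ph d. reduced w \<and> psi \<in> PsiS \<and> ph \<in> mstar PhiS \<and> d \<in> DeltaS \<and>
      f = lam w \<circ> psi \<circ> ph \<circ> d)"

lemma inT1I: "reduced w \<Longrightarrow> psi \<in> PsiS \<Longrightarrow> ph \<in> mstar PhiS \<Longrightarrow> d \<in> DeltaS \<Longrightarrow>
      f = lam w \<circ> psi \<circ> ph \<circ> d \<Longrightarrow> inT1 f"
  unfolding inT1_def by blast

lemma inT1_base: "ph \<in> mstar PhiS \<Longrightarrow> d \<in> DeltaS \<Longrightarrow> inT1 (ph \<circ> d)"
proof -
  assume ph: "ph \<in> mstar PhiS" and d: "d \<in> DeltaS"
  have "idA \<circ> idA = idA" "idA \<circ> ph = ph" using aut_idA_left idA_aut mstar_PhiS_aut[OF ph] by auto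
  then show ?thesis by (intro inT1I[of "[]" idA ph d]) (simp_all add: idA_Psi lam_Nil_idA ph d)
qed

lemma inT1_base2: "psi \<in> PsiS \<Longrightarrow> P \<in> PhiS \<Longrightarrow> ph \<in> mstar PhiS \<Longrightarrow> d \<in> DeltaS \<Longrightarrow> reduced w \<Longrightarrow>
    inT1 (lam w \<circ> psi \<circ> P \<circ> ph \<circ> d)"
  by (rule inT1I[of w psi "P \<circ> ph" d]) (simp_all add: mstar.step comp_assoc)

lemma dl_Delta: "c = lb \<or> c = lB \<Longrightarrow> dl m n c \<in> DeltaS"
  unfolding Delta_char by blast

lemma inv_lb_lB: "inv_letter lb = lB" "inv_letter lB = lb" by (simp_all add: inv_letter_def)

lemma phi_la_lB_Psi: "phi [la] [lB] \<in> PsiS" unfolding Psi_char by auto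
lemma phi_lb_lA_Psi: "phi [lb] [lA] \<in> PsiS" unfolding Psi_char by auto
lemma phi_lB_la_Psi: "phi [lB] [la] \<in> PsiS" unfolding Psi_char by auto

lemma P_in: "P1 \<in> PhiS" "P2 \<in> PhiS" "P3 \<in> PhiS" "P4 \<in> PhiS" by (simp_all add: PhiS_eq)

lemma Q_aut: "Q1 \<in> AutF2" "Q2 \<in> AutF2" "Q3 \<in> AutF2" "Q4 \<in> AutF2"
  by (simp_all add: E8_aut E8_def)

lemma K_idA: assumes g: "g \<in> E8" and d: "d \<in> DeltaS" shows "inT1 (g \<circ> d)"
proof -
  obtain m n c where dd: "d = dl m n c" "c = lb \<or> c = lB" using d unfolding Delta_char by blast
  have ic: "inv_letter c = lb \<or> inv_letter c = lB" using dd(2) by (auto simp: inv_letter_def)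
  consider "g \<in> PhiS" | "g = Q1" | "g = Q2" | "g = Q3" | "g = Q4" using g by (auto simp: E8_def PhiS_eq)
  then show ?thesis
  proof cases
    case 1
    then show ?thesis using inT1_base[OF mstar.step[OF 1 mstar.unit] d] E8_aut[OF g] aut_idA_right
      by (simp add: comp_assoc)
  next
    case 2
    then show ?thesis using dd inT1_base[OF mstar.unit, of "Q1 \<circ> d"] Q1_dl dl_Delta Delta_aut
      by (auto simp: aut_idA_left)
  next
    case 4
    then show ?thesis using dd inT1_base[OF mstar.unit, of "Q3 \<circ> d"] Q3_dl dl_Delta Delta_aut
      by (auto simp: aut_idA_left)
  next
    case 3
    have "Q2 \<circ> d = lam [] \<circ> phi [la] [lB] \<circ> P2 \<circ> dl m n (inv_letter c)"
      using Q2_dl[OF dd(2)] dd(1) by (simp add: lam_Nil_idA aut_idA_left phi_la_lB_Psi Psi_aut comp_assoc)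
    moreover have "idA \<circ> dl m n (inv_letter c) = dl m n (inv_letter c)"
      using aut_idA_left[OF dl_aut[OF ic]] .
    ultimately show ?thesis using 3 inT1_base2[OF phi_la_lB_Psi P_in(2) mstar.unit dl_Delta[OF ic, of m n], of "[]"]
      E8_aut[OF g] by (simp add: aut_idA_right comp_assoc)
  next
    case 5
    have "Q4 \<circ> d = lam [] \<circ> phi [la] [lB] \<circ> P4 \<circ> dl m n (inv_letter c)"
      using Q4_dl[OF dd(2)] dd(1) by (simp add: lam_Nil_idA aut_idA_left phi_la_lB_Psi Psi_aut comp_assoc)
    moreover have "idA \<circ> dl m n (inv_letter c) = dl m n (inv_letter c)"
      using aut_idA_left[OF dl_aut[OF ic]] .
    ultimately show ?thesis using 5 inT1_base2[OF phi_la_lB_Psi P_in(4) mstar.unit dl_Delta[OF ic, of m n], of "[]"]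
      E8_aut[OF g] by (simp add: aut_idA_right comp_assoc)
  qed
qed


lemma K_step:
  assumes g: "g \<in> E8" and P: "P \<in> PhiS" and ph: "ph \<in> mstar PhiS" and d: "d \<in> DeltaS"
  shows "inT1 (g \<circ> (P \<circ> ph) \<circ> d)"
proof -
  have hA: "inT1 (Q \<circ> (P' \<circ> ph) \<circ> d)" if "Q \<circ> P' = lam w \<circ> psi \<circ> X" "reduced w" "psi \<in> PsiS" "X \<in> PhiS"
    for Q P' w psi X
  proof -
    have "Q \<circ> (P' \<circ> ph) \<circ> d = lam w \<circ> psi \<circ> X \<circ> ph \<circ> d" using that(1) by (metis comp_assoc)
    then show ?thesis using inT1_base2[OF that(3) that(4) ph d that(2)] by simp
  qed
  have hB: "inT1 (Q \<circ> (P' \<circ> ph) \<circ> d)" if "Q \<circ> P' = lam w" "reduced w" for Q P' w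
  proof -
    have "lam w \<circ> idA = lam w" by (metis lam_phi phi_comp_idA)
    then have "Q \<circ> (P' \<circ> ph) \<circ> d = lam w \<circ> idA \<circ> ph \<circ> d" using that(1) by (metis comp_assoc)
    then show ?thesis by (intro inT1I[OF that(2) idA_Psi ph d])
  qed
  have hC: "inT1 (Q \<circ> (P' \<circ> ph) \<circ> d)" if "Q \<circ> P' = idA" for Q P'
  proof -
    have "Q \<circ> (P' \<circ> ph) \<circ> d = ph \<circ> d" using that aut_idA_left[OF mstar_PhiS_aut[OF ph]]
      by (metis comp_assoc)
    then show ?thesis using inT1_base[OF ph d] by simp
  qed
  have hP: "inT1 (g \<circ> (P \<circ> ph) \<circ> d)" if "g \<in> PhiS"
    using inT1_base[OF mstar.step[OF that mstar.step[OF P ph]] d] .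
  have gc: "g \<in> PhiS \<or> g = Q1 \<or> g = Q2 \<or> g = Q3 \<or> g = Q4" using g by (auto simp: E8_def PhiS_eq)
  have Pc: "P = P1 \<or> P = P2 \<or> P = P3 \<or> P = P4" using P by (simp add: PhiS_eq)
  have k11: "inT1 (Q1 \<circ> (P1 \<circ> ph) \<circ> d)" using hC[OF PQ_inv(2)] by simp
  have k12: "inT1 (Q1 \<circ> (P2 \<circ> ph) \<circ> d)" using hA[OF tab1 _ phi_lb_lA_Psi P_in(1)] by (simp add: reduced_Cons inv_letter_def)
  have k13: "inT1 (Q1 \<circ> (P3 \<circ> ph) \<circ> d)" using hB[OF tab2] by (simp add: reduced_Cons inv_letter_def)
  have k14: "inT1 (Q1 \<circ> (P4 \<circ> ph) \<circ> d)" using hA[OF tab3 _ phi_lb_lA_Psi P_in(1)] by (simp add: reduced_Cons inv_letter_def)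
  have k21: "inT1 (Q2 \<circ> (P1 \<circ> ph) \<circ> d)" using hA[OF tab4 _ phi_lB_la_Psi P_in(2)] by (simp add: reduced_Cons inv_letter_def)
  have k22: "inT1 (Q2 \<circ> (P2 \<circ> ph) \<circ> d)" using hC[OF PQ_inv(4)] by simp
  have k23: "inT1 (Q2 \<circ> (P3 \<circ> ph) \<circ> d)" using hA[OF tab5 _ phi_lB_la_Psi P_in(2)] by (simp add: reduced_Cons inv_letter_def)
  have k24: "inT1 (Q2 \<circ> (P4 \<circ> ph) \<circ> d)" using hB[OF tab6] by (simp add: reduced_Cons inv_letter_def)
  have k31: "inT1 (Q3 \<circ> (P1 \<circ> ph) \<circ> d)" using hB[OF tab7] by (simp add: reduced_Cons inv_letter_def)
  have k32: "inT1 (Q3 \<circ> (P2 \<circ> ph) \<circ> d)" using hA[OF tab8 _ phi_lb_lA_Psi P_in(1)] by (simp add: reduced_Cons inv_letter_def)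
  have k33: "inT1 (Q3 \<circ> (P3 \<circ> ph) \<circ> d)" using hC[OF PQ_inv(6)] by simp
  have k34: "inT1 (Q3 \<circ> (P4 \<circ> ph) \<circ> d)" using hA[OF tab9 _ phi_lb_lA_Psi P_in(1)] by (simp add: reduced_Cons inv_letter_def)
  have k41: "inT1 (Q4 \<circ> (P1 \<circ> ph) \<circ> d)" using hA[OF tab10 _ phi_lB_la_Psi P_in(2)] by (simp add: reduced_Cons inv_letter_def)
  have k42: "inT1 (Q4 \<circ> (P2 \<circ> ph) \<circ> d)" using hB[OF tab11] by (simp add: reduced_Cons inv_letter_def)
  have k43: "inT1 (Q4 \<circ> (P3 \<circ> ph) \<circ> d)" using hA[OF tab12 _ phi_lB_la_Psi P_in(2)] by (simp add: reduced_Cons inv_letter_def)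
  have k44: "inT1 (Q4 \<circ> (P4 \<circ> ph) \<circ> d)" using hC[OF PQ_inv(8)] by simp
  show ?thesis
  proof (cases "g \<in> PhiS")
    case True
    then show ?thesis by (rule hP)
  next
    case False
    then show ?thesis using gc Pc by (elim disjE) (simp_all add: k11 k12 k13 k14 k21 k22 k23 k24 k31 k32 k33 k34 k41 k42 k43 k44)
  qed
qed

lemma K: assumes g: "g \<in> E8" and ph: "ph \<in> mstar PhiS" and d: "d \<in> DeltaS"
  shows "inT1 (g \<circ> ph \<circ> d)"
  using ph
proof cases
  case unit
  then show ?thesis using K_idA[OF g d] aut_idA_right[OF E8_aut[OF g]] by simp
next
  case (step P ph')
  then show ?thesis using K_step[OF g _ _ d] by blast
qed


lemma Psi_len1: "a \<in> PsiS \<Longrightarrow> length w = 1 \<Longrightarrow> length (a w) = 1"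
proof -
  assume a: "a \<in> PsiS" and w: "length w = 1"
  obtain l1 l2 where aa: "a = phi [l1] [l2]" using a unfolding Psi_char by blast
  obtain m where m: "w = [m]" using w by (cases w) auto
  show ?thesis using aa m by (cases m; cases "fst m") (auto simp: red_reduced)
qed

lemma Psi_comp: "a \<in> PsiS \<Longrightarrow> b \<in> PsiS \<Longrightarrow> a \<circ> b \<in> PsiS"
proof -
  assume a: "a \<in> PsiS" and b: "b \<in> PsiS"
  have "a \<circ> b \<in> AutF2" using aut_comp[OF Psi_aut[OF a] Psi_aut[OF b]] .
  moreover have "length (b ga) = 1" "length (b gb) = 1" using b by (simp_all add: PsiS_def)
  then have "length (a (b ga)) = 1" "length (a (b gb)) = 1" using Psi_len1[OF a] by simp_all
  ultimately show ?thesis by (simp add: PsiS_def)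
qed

lemma aut_lam_comm: "f \<in> AutF2 \<Longrightarrow> f \<circ> lam w = lam (f w) \<circ> f"
proof -
  assume "f \<in> AutF2"
  then obtain x y where "f = phi x y" by (rule aut_phiE)
  then show ?thesis by (simp add: comp_phi_lam)
qed

lemma aut_reduced: "f \<in> AutF2 \<Longrightarrow> reduced (f w)"
proof -
  assume "f \<in> AutF2"
  then obtain x y where "f = phi x y" by (rule aut_phiE)
  then show ?thesis by simp
qed

lemma inT1_idA: "inT1 idA"
proof -
  have e: "dl 0 0 lb = idA" by (simp add: dl_def apow_def idA_conc)
  have "idA \<in> DeltaS" using dl_Delta[of lb 0 0] e by simp
  moreover note e
  moreover have "idA \<circ> idA = idA" using aut_idA_left[OF idA_aut] .
  ultimately show ?thesis
    by (intro inT1I[of "[]" idA idA "idA"]) (auto simp: idA_Psi mstar.unit lam_Nil_idA)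
qed

lemma T1_closed: assumes g: "g \<in> Gen" and f: "inT1 f" shows "inT1 (g \<circ> f)"
proof -
  obtain w psi ph d where w: "reduced w" and psi: "psi \<in> PsiS" and ph: "ph \<in> mstar PhiS"
    and d: "d \<in> DeltaS" and ff: "f = lam w \<circ> psi \<circ> ph \<circ> d"
    using f unfolding inT1_def by blast
  consider "g \<in> LambdaS" | "g \<in> PsiS" | "g \<in> E8" using g unfolding Gen_def by blast
  then show ?thesis
  proof cases
    case 1
    then obtain v where v: "reduced v" "g = lam v" by (auto simp: LambdaS_def)
    have "g \<circ> f = (lam v \<circ> lam w) \<circ> psi \<circ> ph \<circ> d" using v ff by (simp add: comp_assoc)
    then have "g \<circ> f = lam (red (w @ v)) \<circ> psi \<circ> ph \<circ> d" by (simp only: lam_comp)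
    then show ?thesis using psi ph d by (intro inT1I) simp_all
  next
    case 2
    have ga: "g \<in> AutF2" using 2 by (rule Psi_aut)
    have "g \<circ> f = lam (g w) \<circ> (g \<circ> psi) \<circ> ph \<circ> d"
      using ff aut_lam_comm[OF ga, of w] by (simp add: comp_assoc) (metis comp_assoc)
    then show ?thesis using psi ph d Psi_comp[OF 2 psi] aut_reduced[OF ga] by (intro inT1I) simp_all
  next
    case 3
    have ga: "g \<in> AutF2" using 3 by (rule E8_aut)
    obtain g' where g': "g' \<in> E8" "g \<circ> psi = psi \<circ> g'" using E8_Psi_comm[OF 3 psi] by blast
    obtain w2 psi2 ph2 d2 where w2: "reduced w2" and psi2: "psi2 \<in> PsiS" and ph2: "ph2 \<in> mstar PhiS"
      and d2: "d2 \<in> DeltaS" and kk: "g' \<circ> ph \<circ> d = lam w2 \<circ> psi2 \<circ> ph2 \<circ> d2"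
      using K[OF g'(1) ph d] unfolding inT1_def by blast
    have pa: "psi \<in> AutF2" using psi by (rule Psi_aut)
    have "g \<circ> f = lam (g w) \<circ> (g \<circ> psi) \<circ> ph \<circ> d"
      using ff aut_lam_comm[OF ga, of w] by (simp add: comp_assoc) (metis comp_assoc)
    also have "\<dots> = lam (g w) \<circ> psi \<circ> (g' \<circ> ph \<circ> d)" using g'(2) by (simp add: comp_assoc)
    also have "\<dots> = lam (g w) \<circ> (psi \<circ> lam w2) \<circ> psi2 \<circ> ph2 \<circ> d2" using kk by (simp add: comp_assoc)
    also have "\<dots> = lam (g w) \<circ> (lam (psi w2) \<circ> psi) \<circ> psi2 \<circ> ph2 \<circ> d2"
      using aut_lam_comm[OF pa] by simp
    also have "\<dots> = (lam (g w) \<circ> lam (psi w2)) \<circ> (psi \<circ> psi2) \<circ> ph2 \<circ> d2"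
      by (simp add: comp_assoc)
    also have "\<dots> = lam (red (psi w2 @ g w)) \<circ> (psi \<circ> psi2) \<circ> ph2 \<circ> d2"
      by (simp only: lam_comp)
    finally show ?thesis using psi2 ph2 d2 Psi_comp[OF psi psi2] by (intro inT1I) simp_all
  qed
qed

lemma mstar_Gen_T1: "f \<in> mstar Gen \<Longrightarrow> inT1 f"
proof (induction f rule: mstar.induct)
  case unit
  show ?case by (rule inT1_idA)
next
  case (step g m)
  show ?case by (rule T1_closed[OF step.hyps(1) step.IH])
qed

lemma inT1_aut: "inT1 f \<Longrightarrow> f \<in> AutF2"
proof -
  assume "inT1 f"
  then obtain w psi ph d where "reduced w" "psi \<in> PsiS" "ph \<in> mstar PhiS" "d \<in> DeltaS"
    "f = lam w \<circ> psi \<circ> ph \<circ> d" unfolding inT1_def by blast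
  then show ?thesis
    by (metis aut_comp lam_aut Psi_aut mstar_PhiS_aut Delta_aut)
qed

lemma T1_set: "LambdaS \<cdot>\<cdot> PsiS \<cdot>\<cdot> mstar PhiS \<cdot>\<cdot> DeltaS = {f. inT1 f}"
proof
  show "LambdaS \<cdot>\<cdot> PsiS \<cdot>\<cdot> mstar PhiS \<cdot>\<cdot> DeltaS \<subseteq> {f. inT1 f}"
  proof
    fix f assume "f \<in> LambdaS \<cdot>\<cdot> PsiS \<cdot>\<cdot> mstar PhiS \<cdot>\<cdot> DeltaS"
    then obtain h d where "f = h \<circ> d" "h \<in> LambdaS \<cdot>\<cdot> PsiS \<cdot>\<cdot> mstar PhiS" "d \<in> DeltaS"
      unfolding setprod_def by blast
    moreover from this(2) obtain k ph where "h = k \<circ> ph" "k \<in> LambdaS \<cdot>\<cdot> PsiS" "ph \<in> mstar PhiS"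
      unfolding setprod_def by blast
    moreover from this(2) obtain l psi where "k = l \<circ> psi" "l \<in> LambdaS" "psi \<in> PsiS"
      unfolding setprod_def by blast
    moreover from this(2) obtain w where "l = lam w" "reduced w" unfolding LambdaS_def by auto
    ultimately show "f \<in> {f. inT1 f}" unfolding inT1_def by blast
  qed
next
  show "{f. inT1 f} \<subseteq> LambdaS \<cdot>\<cdot> PsiS \<cdot>\<cdot> mstar PhiS \<cdot>\<cdot> DeltaS"
  proof
    fix f assume "f \<in> {f. inT1 f}"
    then obtain w psi ph d where "reduced w" "psi \<in> PsiS" "ph \<in> mstar PhiS" "d \<in> DeltaS"
      "f = lam w \<circ> psi \<circ> ph \<circ> d" unfolding inT1_def by blast
    moreover have "lam w \<in> LambdaS" using \<open>reduced w\<close> by (auto simp: LambdaS_def)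
    ultimately show "f \<in> LambdaS \<cdot>\<cdot> PsiS \<cdot>\<cdot> mstar PhiS \<cdot>\<cdot> DeltaS"
      unfolding setprod_def by blast
  qed
qed

theorem first_eq: "AutF2 = LambdaS \<cdot>\<cdot> PsiS \<cdot>\<cdot> mstar PhiS \<cdot>\<cdot> DeltaS"
  unfolding T1_set using aut_gen mstar_Gen_T1 inT1_aut by blast


section \<open>Second decomposition\<close>

definition "Jm = phi [lB] [lA]"
definition "tau1 = phi [lA] [lb]"
definition "tau2 = phi [lA] [lB]"

lemma id_JQ1J: "Jm \<circ> Q1 \<circ> Jm = Q4"
  unfolding Jm_def Q1_def Q4_def phi_comp by (simp add: conc)
lemma id_Q3: "Q3 = lam [la] \<circ> Q1"
  unfolding Q3_def Q1_def lam_conc phi_comp by (simp add: conc)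
lemma id_Q2: "Q2 = lam [lB] \<circ> Q4"
  unfolding Q2_def Q4_def lam_conc phi_comp by (simp add: conc)
lemma id_P3: "P3 = lam [lA] \<circ> P1"
  unfolding P3_def P1_def lam_conc phi_comp by (simp add: conc)
lemma id_P2: "P2 = lam [lb] \<circ> P4"
  unfolding P2_def P4_def lam_conc phi_comp by (simp add: conc)
lemma id_P1Q4: "P1 \<circ> Q4 = lam [la] \<circ> phi [lB] [la] \<circ> Q1"
  unfolding P1_def Q4_def Q1_def lam_conc phi_comp by (simp add: conc)
lemma id_P4Q1: "P4 \<circ> Q1 = lam [lB] \<circ> phi [lb] [lA] \<circ> Q4"
  unfolding P4_def Q4_def Q1_def lam_conc phi_comp by (simp add: conc)
lemma id_P4: "P4 = lam [lB] \<circ> phi [lb] [lA] \<circ> Q4 \<circ> P1"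
  unfolding P4_def Q4_def P1_def lam_conc phi_comp by (simp add: conc)

lemma tau_Psi: "tau1 \<in> PsiS" "tau2 \<in> PsiS"
  unfolding tau1_def tau2_def Psi_char by auto

lemma tau_aut: "tau1 \<in> AutF2" "tau2 \<in> AutF2"
  using tau_Psi Psi_aut by auto

lemma P1_aut: "P1 \<in> AutF2" by (simp add: E8_aut E8_def)

lemma QQ_aut: "g \<in> {Q1, Q4} \<Longrightarrow> g \<in> AutF2" using Q_aut by auto

lemma mstarQ_aut: "s \<in> mstar {Q1, Q4} \<Longrightarrow> s \<in> AutF2" by (rule mstar_aut[OF QQ_aut])
lemma mstarP1_aut: "p \<in> mstar {P1} \<Longrightarrow> p \<in> AutF2" by (rule mstar_aut) (use P1_aut in auto)

definition inT2 :: "(letter list \<Rightarrow> letter list) \<Rightarrow> bool" where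
  "inT2 f \<longleftrightarrow> (\<exists>psi s w p t. psi \<in> PsiS \<and> s \<in> mstar {Q1, Q4} \<and> reduced w \<and> p \<in> mstar {P1} \<and>
      t \<in> {tau1, tau2} \<and> f = psi \<circ> s \<circ> lam w \<circ> p \<circ> t)"

lemma inT2I: "psi \<in> PsiS \<Longrightarrow> s \<in> mstar {Q1, Q4} \<Longrightarrow> reduced w \<Longrightarrow> p \<in> mstar {P1} \<Longrightarrow>
      t \<in> {tau1, tau2} \<Longrightarrow> f = psi \<circ> s \<circ> lam w \<circ> p \<circ> t \<Longrightarrow> inT2 f"
  unfolding inT2_def by blast

lemma inT2_lam: assumes v: "reduced v" and f: "inT2 f" shows "inT2 (lam v \<circ> f)"
proof -
  obtain psi s w p t where psi: "psi \<in> PsiS" and s: "s \<in> mstar {Q1, Q4}" and w: "reduced w"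
    and p: "p \<in> mstar {P1}" and t: "t \<in> {tau1, tau2}" and ff: "f = psi \<circ> s \<circ> lam w \<circ> p \<circ> t"
    using f unfolding inT2_def by blast
  obtain v1 where v1: "reduced v1" "lam v \<circ> psi = psi \<circ> lam v1" using lam_comp_aut[OF Psi_aut[OF psi] v] by blast
  obtain v2 where v2: "reduced v2" "lam v1 \<circ> s = s \<circ> lam v2" using lam_comp_aut[OF mstarQ_aut[OF s] v1(1)] by blast
  have "lam v \<circ> f = (lam v \<circ> psi) \<circ> s \<circ> lam w \<circ> p \<circ> t" using ff by (simp add: comp_assoc)
  also have "\<dots> = psi \<circ> (lam v1 \<circ> s) \<circ> lam w \<circ> p \<circ> t" using v1 by (simp add: comp_assoc)
  also have "\<dots> = psi \<circ> s \<circ> (lam v2 \<circ> lam w) \<circ> p \<circ> t" using v2 by (simp add: comp_assoc)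
  also have "\<dots> = psi \<circ> s \<circ> lam (red (w @ v2)) \<circ> p \<circ> t" by (simp only: lam_comp)
  finally show ?thesis using psi s p t by (intro inT2I) simp_all
qed

lemma Q14_in: "Q1 \<in> {Q1, Q4}" "Q4 \<in> {Q1, Q4}" by simp_all

lemma inT2_simple: "s \<in> mstar {Q1, Q4} \<Longrightarrow> reduced w \<Longrightarrow> p \<in> mstar {P1} \<Longrightarrow> t \<in> {tau1, tau2} \<Longrightarrow>
    psi \<in> PsiS \<Longrightarrow> inT2 (psi \<circ> s \<circ> lam w \<circ> p \<circ> t)"
  by (rule inT2I) simp_all

lemma comp_rew: "a \<circ> b = c \<circ> d \<Longrightarrow> a \<circ> (b \<circ> r) = c \<circ> (d \<circ> r)"
  by (metis comp_assoc)

lemma comp_rew2: "a \<circ> b = c \<Longrightarrow> a \<circ> (b \<circ> r) = c \<circ> r"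
  by (metis comp_assoc)

lemma K2: assumes g: "g \<in> E8" and s: "s \<in> mstar {Q1, Q4}" and w: "reduced w" and p: "p \<in> mstar {P1}"
  and t: "t \<in> {tau1, tau2}"
  shows "inT2 (g \<circ> s \<circ> lam w \<circ> p \<circ> t)"
proof -
  have sa: "s \<in> AutF2" using mstarQ_aut[OF s] .
  have pa: "p \<in> AutF2" using mstarP1_aut[OF p] .
  have rl: "reduced [la]" "reduced [lA]" "reduced [lb]" "reduced [lB]" by simp_all
  have idl: "idA \<circ> h = h" if "h \<in> AutF2" for h using aut_idA_left[OF that] .
  have Q1case: "inT2 (Q1 \<circ> s \<circ> lam w \<circ> p \<circ> t)"
    if "s \<in> mstar {Q1, Q4}" for s
    using inT2_simple[OF mstar.step[OF Q14_in(1) that] w p t idA_Psi] idl[OF mstarQ_aut[OF mstar.step[OF Q14_in(1) that]]]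
    by (simp add: comp_assoc)
  have Q4case: "inT2 (Q4 \<circ> s \<circ> lam w \<circ> p \<circ> t)"
    if "s \<in> mstar {Q1, Q4}" for s
    using inT2_simple[OF mstar.step[OF Q14_in(2) that] w p t idA_Psi] idl[OF mstarQ_aut[OF mstar.step[OF Q14_in(2) that]]]
    by (simp add: comp_assoc)
  have P1case: "inT2 (P1 \<circ> s \<circ> lam w \<circ> p \<circ> t)"
    using s
  proof cases
    case unit
    have "P1 \<circ> s \<circ> lam w \<circ> p \<circ> t = lam (P1 w) \<circ> (idA \<circ> idA \<circ> lam [] \<circ> (P1 \<circ> p) \<circ> t)"
      using unit aut_lam_comm[OF P1_aut, of w] aut_idA_right[OF P1_aut] idl[OF idA_aut]
        idl[OF aut_comp[OF P1_aut pa]]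
      by (simp add: lam_Nil_idA comp_assoc)
    moreover have "inT2 (idA \<circ> idA \<circ> lam [] \<circ> (P1 \<circ> p) \<circ> t)"
      by (rule inT2I[OF idA_Psi mstar.unit _ mstar.step[OF _ p] t]) simp_all
    ultimately show ?thesis using inT2_lam aut_reduced[OF P1_aut] by metis
  next
    case (step q s')
    then show ?thesis
    proof (cases "q = Q1")
      case True
      then have "P1 \<circ> s \<circ> lam w \<circ> p \<circ> t = s' \<circ> lam w \<circ> p \<circ> t"
        using step True by (simp add: comp_assoc comp_rew2[OF PQ_inv(1)] comp_rew2[OF idl[OF mstarQ_aut[OF step(3)]]])
      moreover have "inT2 (idA \<circ> s' \<circ> lam w \<circ> p \<circ> t)" by (rule inT2_simple[OF step(3) w p t idA_Psi])
      ultimately show ?thesis using idl[OF mstarQ_aut[OF step(3)]] by (simp add: comp_assoc)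
    next
      case False
      then have q: "q = Q4" using step by simp
      have "P1 \<circ> s \<circ> lam w \<circ> p \<circ> t = lam [la] \<circ> (phi [lB] [la] \<circ> (Q1 \<circ> s') \<circ> lam w \<circ> p \<circ> t)"
        using step q by (simp add: comp_assoc comp_rew2[OF id_P1Q4])
      moreover have "inT2 (phi [lB] [la] \<circ> (Q1 \<circ> s') \<circ> lam w \<circ> p \<circ> t)"
        by (rule inT2_simple[OF mstar.step[OF Q14_in(1) step(3)] w p t phi_lB_la_Psi])
      ultimately show ?thesis using inT2_lam[OF rl(1)] by simp
    qed
  qed
  have P4case: "inT2 (P4 \<circ> s \<circ> lam w \<circ> p \<circ> t)"
    using s
  proof cases
    case unit
    have P4a: "P4 \<in> AutF2" by (simp add: E8_aut E8_def)
    have "P4 \<circ> s \<circ> lam w \<circ> p \<circ> t = lam (P4 w) \<circ> (P4 \<circ> (p \<circ> t))"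
      using unit by (simp add: comp_assoc comp_rew2[OF aut_idA_right[OF P4a]] comp_rew[OF aut_lam_comm[OF P4a]])
    also have "P4 \<circ> (p \<circ> t) = lam [lB] \<circ> (phi [lb] [lA] \<circ> Q4 \<circ> P1 \<circ> p \<circ> t)"
      by (simp add: id_P4 comp_assoc)
    finally have e: "P4 \<circ> s \<circ> lam w \<circ> p \<circ> t = lam (P4 w) \<circ> (lam [lB] \<circ> (phi [lb] [lA] \<circ> Q4 \<circ> P1 \<circ> p \<circ> t))" .
    have "inT2 (phi [lb] [lA] \<circ> Q4 \<circ> P1 \<circ> p \<circ> t)"
      by (rule inT2I[OF phi_lb_lA_Psi mstar.step[OF Q14_in(2) mstar.unit] reduced_Nil mstar.step[OF _ p] t])
        (simp_all add: comp_assoc lam_Nil_idA comp_rew2[OF aut_idA_right[OF Q_aut(4)]])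
    then show ?thesis unfolding e using inT2_lam[OF aut_reduced[OF P4a]] inT2_lam[OF rl(4)] by blast
  next
    case (step q s')
    then show ?thesis
    proof (cases "q = Q4")
      case True
      then have "P4 \<circ> s \<circ> lam w \<circ> p \<circ> t = s' \<circ> lam w \<circ> p \<circ> t"
        using step True by (simp add: comp_assoc comp_rew2[OF PQ_inv(7)] comp_rew2[OF idl[OF mstarQ_aut[OF step(3)]]])
      moreover have "inT2 (idA \<circ> s' \<circ> lam w \<circ> p \<circ> t)" by (rule inT2_simple[OF step(3) w p t idA_Psi])
      ultimately show ?thesis using idl[OF mstarQ_aut[OF step(3)]] by (simp add: comp_assoc)
    next
      case False
      then have q: "q = Q1" using step by simp
      have "P4 \<circ> s \<circ> lam w \<circ> p \<circ> t = lam [lB] \<circ> (phi [lb] [lA] \<circ> (Q4 \<circ> s') \<circ> lam w \<circ> p \<circ> t)"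
        using step q by (simp add: comp_assoc comp_rew2[OF id_P4Q1])
      moreover have "inT2 (phi [lb] [lA] \<circ> (Q4 \<circ> s') \<circ> lam w \<circ> p \<circ> t)"
        by (rule inT2_simple[OF mstar.step[OF Q14_in(2) step(3)] w p t phi_lb_lA_Psi])
      ultimately show ?thesis using inT2_lam[OF rl(4)] by simp
    qed
  qed
  consider "g = P1" | "g = P2" | "g = P3" | "g = P4" | "g = Q1" | "g = Q2" | "g = Q3" | "g = Q4"
    using g by (auto simp: E8_def)
  then show ?thesis
  proof cases
    case 1 then show ?thesis using P1case by simp
  next
    case 2 then show ?thesis using inT2_lam[OF rl(3) P4case] by (simp add: id_P2 comp_assoc)
  next
    case 3 then show ?thesis using inT2_lam[OF rl(2) P1case] by (simp add: id_P3 comp_assoc)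
  next
    case 4 then show ?thesis using P4case by simp
  next
    case 5 then show ?thesis using Q1case[OF s] by simp
  next
    case 6 then show ?thesis using inT2_lam[OF rl(4) Q4case[OF s]] by (simp add: id_Q2 comp_assoc)
  next
    case 7 then show ?thesis using inT2_lam[OF rl(1) Q1case[OF s]] by (simp add: id_Q3 comp_assoc)
  next
    case 8 then show ?thesis using Q4case[OF s] by simp
  qed
qed



lemma T2_closed: assumes g: "g \<in> Gen" and f: "inT2 f" shows "inT2 (g \<circ> f)"
proof -
  obtain psi s w p t where psi: "psi \<in> PsiS" and s: "s \<in> mstar {Q1, Q4}" and w: "reduced w"
    and p: "p \<in> mstar {P1}" and t: "t \<in> {tau1, tau2}" and ff: "f = psi \<circ> s \<circ> lam w \<circ> p \<circ> t"
    using f unfolding inT2_def by blast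
  consider "g \<in> LambdaS" | "g \<in> PsiS" | "g \<in> E8" using g unfolding Gen_def by blast
  then show ?thesis
  proof cases
    case 1
    then obtain v where "reduced v" "g = lam v" by (auto simp: LambdaS_def)
    then show ?thesis using inT2_lam f by simp
  next
    case 2
    have "g \<circ> f = (g \<circ> psi) \<circ> s \<circ> lam w \<circ> p \<circ> t" using ff by (simp add: comp_assoc)
    then show ?thesis using Psi_comp[OF 2 psi] s w p t by (intro inT2I) simp_all
  next
    case 3
    obtain g' where g': "g' \<in> E8" "g \<circ> psi = psi \<circ> g'" using E8_Psi_comm[OF 3 psi] by blast
    obtain psi2 s2 w2 p2 t2 where psi2: "psi2 \<in> PsiS" and s2: "s2 \<in> mstar {Q1, Q4}" and w2: "reduced w2"
      and p2: "p2 \<in> mstar {P1}" and t2: "t2 \<in> {tau1, tau2}"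
      and kk: "g' \<circ> s \<circ> lam w \<circ> p \<circ> t = psi2 \<circ> s2 \<circ> lam w2 \<circ> p2 \<circ> t2"
      using K2[OF g'(1) s w p t] unfolding inT2_def by blast
    have "g \<circ> f = psi \<circ> (g' \<circ> s \<circ> lam w \<circ> p \<circ> t)" using ff by (simp add: comp_assoc comp_rew[OF g'(2)])
    also have "\<dots> = (psi \<circ> psi2) \<circ> s2 \<circ> lam w2 \<circ> p2 \<circ> t2" using kk by (simp add: comp_assoc)
    finally show ?thesis using Psi_comp[OF psi psi2] s2 w2 p2 t2 by (intro inT2I) simp_all
  qed
qed

lemma tau1_inv: "tau1 \<circ> tau1 = idA"
  unfolding tau1_def phi_comp idA_conc by (simp add: conc)

lemma inT2_idA: "inT2 idA"
proof (rule inT2I[OF tau_Psi(1) mstar.unit reduced_Nil mstar.unit])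
  show "tau1 \<in> {tau1, tau2}" by simp
  have "idA \<circ> tau1 = tau1" using aut_idA_left[OF tau_aut(1)] .
  then show "idA = tau1 \<circ> idA \<circ> lam [] \<circ> idA \<circ> tau1"
    using tau1_inv by (simp add: lam_Nil_idA comp_assoc aut_idA_left[OF idA_aut] comp_rew2)
qed

lemma mstar_Gen_T2: "f \<in> mstar Gen \<Longrightarrow> inT2 f"
proof (induction f rule: mstar.induct)
  case unit
  show ?case by (rule inT2_idA)
next
  case (step g m)
  show ?case by (rule T2_closed[OF step.hyps(1) step.IH])
qed

lemma autinv_eq:
  assumes f: "f \<in> AutF2" and g: "g \<in> AutF2" and gf: "g \<circ> f = idA" and fg: "f \<circ> g = idA"
  shows "autinv f = g"
  unfolding autinv_def
proof (rule the_equality)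
  have "g (f w) = w" if "w \<in> F2" for w
  proof -
    have "g (f w) = (g \<circ> f) w" by simp
    also have "\<dots> = w" using gf that by (simp add: idA_apply red_reduced)
    finally show ?thesis .
  qed
  then show "g \<in> AutF2 \<and> (\<forall>w\<in>F2. g (f w) = w)" using g by blast
next
  fix h assume h: "h \<in> AutF2 \<and> (\<forall>w\<in>F2. h (f w) = w)"
  have fga: "f (g x) = x" if "reduced x" for x
  proof -
    have "f (g x) = (f \<circ> g) x" by simp
    also have "\<dots> = x" using fg that by (simp add: idA_apply red_reduced)
    finally show ?thesis .
  qed
  have hh: "h (f (g x)) = g x" for x using h aut_reduced[OF g, of x] by simp
  have "h ga = g ga" using hh[of ga] fga[of ga] by simp
  moreover have "h gb = g gb" using hh[of gb] fga[of gb] by simp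
  moreover have "h = phi (h ga) (h gb)" using aut_phi h by blast
  moreover have "g = phi (g ga) (g gb)" using aut_phi g by blast
  ultimately show "h = g" by simp
qed

lemma Jm_Psi: "Jm \<in> PsiS" unfolding Jm_def Psi_char by auto

lemma Jm_inv: "Jm \<circ> Jm = idA"
  unfolding Jm_def phi_comp idA_conc by (simp add: conc)

lemma Sigma0_eq: "Sigma0 = {P1, Jm}"
  by (simp add: Sigma0_def P1_def Jm_def gmult_def ga_def gb_def red_reduced reduced_Cons inv_letter_def)

lemma setinv_Sigma0: "setinv Sigma0 = {Q1, Jm}"
proof -
  have "autinv P1 = Q1" using autinv_eq[OF P1_aut Q_aut(1) PQ_inv(2) PQ_inv(1)] .
  moreover have "autinv Jm = Jm" using autinv_eq[OF Psi_aut[OF Jm_Psi] Psi_aut[OF Jm_Psi] Jm_inv Jm_inv] .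
  ultimately show ?thesis by (simp add: setinv_def Sigma0_eq)
qed

lemma mstar_Q_sub: "s \<in> mstar {Q1, Q4} \<Longrightarrow> s \<in> mstar {Q1, Jm}"
proof (induction s rule: mstar.induct)
  case unit
  then show ?case by (rule mstar.unit)
next
  case (step q m)
  show ?case
  proof (cases "q = Q1")
    case True
    have "Q1 \<circ> m \<in> mstar {Q1, Jm}" by (rule mstar.step) (simp_all add: step.IH)
    then show ?thesis by (subst True)
  next
    case False
    then have "q = Q4" using step.hyps by simp
    then have eq: "q \<circ> m = Jm \<circ> (Q1 \<circ> (Jm \<circ> m))" by (simp add: id_JQ1J[symmetric] comp_assoc)
    have mem: "Jm \<circ> (Q1 \<circ> (Jm \<circ> m)) \<in> mstar {Q1, Jm}"
      by (intro mstar.step) (simp_all add: step.IH)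
    show ?thesis by (subst eq) (rule mem)
  qed
qed

lemma P1_eq: "phi ga (gmult gb ga) = P1"
  by (simp add: P1_def gmult_def ga_def gb_def red_reduced reduced_Cons inv_letter_def)

lemma tau_eq: "phi (ginv ga) gb = tau1" "phi (ginv ga) (ginv gb) = tau2"
  by (simp_all add: tau1_def tau2_def ga_def gb_def inv_letter_def)

lemma setinv_aut: "h \<in> setinv Sigma0 \<Longrightarrow> h \<in> AutF2"
  using Q_aut(1) Psi_aut[OF Jm_Psi] by (auto simp: setinv_Sigma0)

theorem second_eq: "AutF2 = PsiS \<cdot>\<cdot> mstar (setinv Sigma0) \<cdot>\<cdot> LambdaS \<cdot>\<cdot> mstar {phi ga (gmult gb ga)}
                 \<cdot>\<cdot> {phi (ginv ga) gb, phi (ginv ga) (ginv gb)}"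
  unfolding P1_eq tau_eq
proof
  show "AutF2 \<subseteq> PsiS \<cdot>\<cdot> mstar (setinv Sigma0) \<cdot>\<cdot> LambdaS \<cdot>\<cdot> mstar {P1} \<cdot>\<cdot> {tau1, tau2}"
  proof
    fix f assume "f \<in> AutF2"
    then have "inT2 f" using aut_gen mstar_Gen_T2 by blast
    then obtain psi s w p t where "psi \<in> PsiS" "s \<in> mstar {Q1, Q4}" "reduced w" "p \<in> mstar {P1}"
      "t \<in> {tau1, tau2}" "f = psi \<circ> s \<circ> lam w \<circ> p \<circ> t" unfolding inT2_def by blast
    moreover have "lam w \<in> LambdaS" using \<open>reduced w\<close> by (auto simp: LambdaS_def)
    moreover have "s \<in> mstar (setinv Sigma0)" using mstar_Q_sub \<open>s \<in> mstar {Q1, Q4}\<close>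
      by (simp add: setinv_Sigma0)
    ultimately show "f \<in> PsiS \<cdot>\<cdot> mstar (setinv Sigma0) \<cdot>\<cdot> LambdaS \<cdot>\<cdot> mstar {P1} \<cdot>\<cdot> {tau1, tau2}"
      unfolding setprod_def by blast
  qed
next
  show "PsiS \<cdot>\<cdot> mstar (setinv Sigma0) \<cdot>\<cdot> LambdaS \<cdot>\<cdot> mstar {P1} \<cdot>\<cdot> {tau1, tau2} \<subseteq> AutF2"
  proof
    fix f assume "f \<in> PsiS \<cdot>\<cdot> mstar (setinv Sigma0) \<cdot>\<cdot> LambdaS \<cdot>\<cdot> mstar {P1} \<cdot>\<cdot> {tau1, tau2}"
    then obtain psi s l p t where "psi \<in> PsiS" "s \<in> mstar (setinv Sigma0)" "l \<in> LambdaS"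
      "p \<in> mstar {P1}" "t \<in> {tau1, tau2}" "f = psi \<circ> s \<circ> l \<circ> p \<circ> t"
      unfolding setprod_def by blast
    moreover have "s \<in> AutF2" using mstar_aut[OF setinv_aut] \<open>s \<in> mstar (setinv Sigma0)\<close> by blast
    moreover have "l \<in> AutF2" using \<open>l \<in> LambdaS\<close> lam_aut by (auto simp: LambdaS_def)
    moreover have "t \<in> AutF2" using \<open>t \<in> {tau1, tau2}\<close> tau_aut by auto
    ultimately show "f \<in> AutF2"
      using aut_comp[OF aut_comp[OF aut_comp[OF aut_comp[OF Psi_aut[OF \<open>psi \<in> PsiS\<close>]]]]]
        mstarP1_aut[OF \<open>p \<in> mstar {P1}\<close>] by simp
  qed
qed


theorem mainTheorem11:
  shows "AutF2 = LambdaS \<cdot>\<cdot> PsiS \<cdot>\<cdot> mstar PhiS \<cdot>\<cdot> DeltaS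
       \<and> AutF2 = PsiS \<cdot>\<cdot> mstar (setinv Sigma0) \<cdot>\<cdot> LambdaS \<cdot>\<cdot> mstar {phi ga (gmult gb ga)}
                 \<cdot>\<cdot> {phi (ginv ga) gb, phi (ginv ga) (ginv gb)}"
  using first_eq second_eq by blast

end
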